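(* Let $M$ be a finite group with normal subgroups $K_0\leq K$, and let $E$ be a group acting on $M$ stabilizing $K$ and $K_0$. Let $\mathbb K\subseteq\mathrm{Irr}(K)$ be $ME$-stable. Assume: (i) $K=\operatorname{Z}(K)K_0$; (ii) there exists an $E$-stable subgroup $V\leq M$ such that (ii.1) $M=KV$ and $H:=V\cap K\leq\operatorname{Z}(K)$, and (ii.2) there exists a $VE$-equivariant extension map $\Lambda_0$ with respect to $H\lhd V$ for $\bigcup_{\lambda\in\mathbb K}\mathrm{Irr}(H\mid\lambda)$; (iii) with $\epsilon\colon V\to V/H$ the canonical surjection, there exists an $\epsilon(V)E$-equivariant extension map $\Lambda_\epsilon$ with respect to $K_0\lhd K_0\rtimes\epsilon(V)$ for $\bigcup_{\lambda\in\mathbb K}\mathrm{Irr}(K_0\mid\lambda)$. Then there exists an $ME$-equivariant extension map with respect to $K\lhd M$ for $\mathbb K$.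
   Context: An extension map with respect to $H\lhd G'$ for $\mathbb I\subseteq\mathrm{Irr}(H)$ is a map assigning to each $\varphi\in\mathbb I$ an extension of $\varphi$ to its stabilizer $G'_\varphi$; it is $X$-equivariant if it commutes with the action of $X$ by conjugation/automorphisms. $\mathrm{Irr}(H\mid\lambda)$ denotes the irreducible constituents of the restriction of $\lambda$ to $H$. In (iii), $V/H$ acts on $K_0$ since $H\le\operatorname{Z}(K)$ acts trivially, and $K_0\rtimes\epsilon(V)$ is the corresponding semidirect product. *)

theory Defs
  imports "HOL-Algebra.Algebra" "Jordan_Normal_Form.Matrix"
begin

definition is_rep :: "('g, 'b) monoid_scheme \<Rightarrow> nat \<Rightarrow> ('g \<Rightarrow> complex mat) \<Rightarrow> bool" where
  "is_rep G n \<rho> \<longleftrightarrow> 0 < n \<and> (\<forall>g\<in>carrier G. \<rho> g \<in> carrier_mat n n) \<and>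
     \<rho> \<one>\<^bsub>G\<^esub> = 1\<^sub>m n \<and>
     (\<forall>g\<in>carrier G. \<forall>h\<in>carrier G. \<rho> (g \<otimes>\<^bsub>G\<^esub> h) = \<rho> g * \<rho> h)"

definition is_subspace :: "nat \<Rightarrow> complex vec set \<Rightarrow> bool" where
  "is_subspace n W \<longleftrightarrow> W \<subseteq> carrier_vec n \<and> 0\<^sub>v n \<in> W \<and>
     (\<forall>v\<in>W. \<forall>w\<in>W. v + w \<in> W) \<and> (\<forall>c. \<forall>v\<in>W. c \<cdot>\<^sub>v v \<in> W)"

definition irreducible_rep :: "('g, 'b) monoid_scheme \<Rightarrow> nat \<Rightarrow> ('g \<Rightarrow> complex mat) \<Rightarrow> bool" where
  "irreducible_rep G n \<rho> \<longleftrightarrow> is_rep G n \<rho> \<and>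
     (\<forall>W. is_subspace n W \<and> (\<forall>g\<in>carrier G. \<forall>w\<in>W. \<rho> g *\<^sub>v w \<in> W)
        \<longrightarrow> W = {0\<^sub>v n} \<or> W = carrier_vec n)"

definition mat_trace :: "complex mat \<Rightarrow> complex" where
  "mat_trace A = (\<Sum>i<dim_row A. A $$ (i, i))"

text \<open>Characters are functions on the element type, vanishing outside the carrier.\<close>
definition Irr :: "('g, 'b) monoid_scheme \<Rightarrow> ('g \<Rightarrow> complex) set" where
  "Irr G = {\<chi>. \<exists>n \<rho>. irreducible_rep G n \<rho> \<and>
              \<chi> = (\<lambda>g. if g \<in> carrier G then mat_trace (\<rho> g) else 0)}"

definition restr :: "('g \<Rightarrow> complex) \<Rightarrow> 'g set \<Rightarrow> ('g \<Rightarrow> complex)" where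
  "restr \<chi> N = (\<lambda>x. if x \<in> N then \<chi> x else 0)"

text \<open>Irr(N | chi): irreducible constituents of the restriction of chi to N
  (those phi in Irr(N) with nonzero inner product with Res chi).\<close>
definition Irr_under :: "('g, 'b) monoid_scheme \<Rightarrow> 'g set \<Rightarrow> ('g \<Rightarrow> complex) \<Rightarrow> ('g \<Rightarrow> complex) set" where
  "Irr_under G N \<chi> = {\<phi> \<in> Irr (G\<lparr>carrier := N\<rparr>).
      (\<Sum>h\<in>N. restr \<chi> N h * cnj (\<phi> h)) / of_nat (card N) \<noteq> 0}"

definition conjc :: "('g, 'b) monoid_scheme \<Rightarrow> 'g \<Rightarrow> ('g \<Rightarrow> complex) \<Rightarrow> ('g \<Rightarrow> complex)" where
  "conjc G g \<chi> = (\<lambda>x. if x \<in> carrier G then \<chi> (inv\<^bsub>G\<^esub> g \<otimes>\<^bsub>G\<^esub> x \<otimes>\<^bsub>G\<^esub> g) else 0)"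

definition autc :: "('g, 'b) monoid_scheme \<Rightarrow> ('e, 'c) monoid_scheme \<Rightarrow> ('e \<Rightarrow> 'g \<Rightarrow> 'g)
     \<Rightarrow> 'e \<Rightarrow> ('g \<Rightarrow> complex) \<Rightarrow> ('g \<Rightarrow> complex)" where
  "autc G E \<beta> e \<chi> = (\<lambda>x. if x \<in> carrier G then \<chi> (\<beta> (inv\<^bsub>E\<^esub> e) x) else 0)"

definition acts_by_auts :: "('e, 'c) monoid_scheme \<Rightarrow> ('g, 'b) monoid_scheme \<Rightarrow> ('e \<Rightarrow> 'g \<Rightarrow> 'g) \<Rightarrow> bool" where
  "acts_by_auts E G \<alpha> \<longleftrightarrow> group E \<and>
     (\<forall>e\<in>carrier E. \<alpha> e \<in> iso G G) \<and>
     (\<forall>e\<in>carrier E. \<forall>f\<in>carrier E. \<forall>x\<in>carrier G. \<alpha> (e \<otimes>\<^bsub>E\<^esub> f) x = \<alpha> e (\<alpha> f x))"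

definition stab :: "('g, 'b) monoid_scheme \<Rightarrow> ('g \<Rightarrow> complex) \<Rightarrow> 'g set" where
  "stab G \<phi> = {g \<in> carrier G. conjc G g \<phi> = \<phi>}"

definition ext_map :: "('g, 'b) monoid_scheme \<Rightarrow> 'g set \<Rightarrow> ('g \<Rightarrow> complex) set
     \<Rightarrow> (('g \<Rightarrow> complex) \<Rightarrow> ('g \<Rightarrow> complex)) \<Rightarrow> bool" where
  "ext_map G N I \<Lambda> \<longleftrightarrow> (\<forall>\<phi>\<in>I. \<Lambda> \<phi> \<in> Irr (G\<lparr>carrier := stab G \<phi>\<rparr>) \<and> restr (\<Lambda> \<phi>) N = \<phi>)"

definition conj_equivariant :: "('g, 'b) monoid_scheme \<Rightarrow> 'g set \<Rightarrow> ('g \<Rightarrow> complex) set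
     \<Rightarrow> (('g \<Rightarrow> complex) \<Rightarrow> ('g \<Rightarrow> complex)) \<Rightarrow> bool" where
  "conj_equivariant G S I \<Lambda> \<longleftrightarrow> (\<forall>s\<in>S. \<forall>\<phi>\<in>I. \<Lambda> (conjc G s \<phi>) = conjc G s (\<Lambda> \<phi>))"

definition aut_equivariant :: "('g, 'b) monoid_scheme \<Rightarrow> ('e, 'c) monoid_scheme \<Rightarrow> ('e \<Rightarrow> 'g \<Rightarrow> 'g)
     \<Rightarrow> ('g \<Rightarrow> complex) set \<Rightarrow> (('g \<Rightarrow> complex) \<Rightarrow> ('g \<Rightarrow> complex)) \<Rightarrow> bool" where
  "aut_equivariant G E \<beta> I \<Lambda> \<longleftrightarrow>
     (\<forall>e\<in>carrier E. \<forall>\<phi>\<in>I. \<Lambda> (autc G E \<beta> e \<phi>) = autc G E \<beta> e (\<Lambda> \<phi>))"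

definition center :: "('g, 'b) monoid_scheme \<Rightarrow> 'g set \<Rightarrow> 'g set" where
  "center G K = {z \<in> K. \<forall>k\<in>K. z \<otimes>\<^bsub>G\<^esub> k = k \<otimes>\<^bsub>G\<^esub> z}"

text \<open>K0 x| eps(V), where eps(V) = V/H acts on K0 by conjugation with any representative
  (well defined since H acts trivially on K0).  Elements are pairs (k, coset H v).\<close>
definition sdp :: "('g, 'b) monoid_scheme \<Rightarrow> 'g set \<Rightarrow> 'g set \<Rightarrow> 'g set \<Rightarrow> ('g \<times> 'g set) monoid" where
  "sdp M K0 V H = \<lparr>carrier = K0 \<times> rcosets\<^bsub>M\<lparr>carrier := V\<rparr>\<^esub> H,
     monoid.mult = (\<lambda>(k, C) (k', C'). (let c = (SOME c. c \<in> C) in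
               (k \<otimes>\<^bsub>M\<^esub> (c \<otimes>\<^bsub>M\<^esub> k' \<otimes>\<^bsub>M\<^esub> inv\<^bsub>M\<^esub> c), C <#>\<^bsub>M\<^esub> C'))),
     monoid.one = (\<one>\<^bsub>M\<^esub>, H)\<rparr>"

definition sdp_act :: "('e \<Rightarrow> 'g \<Rightarrow> 'g) \<Rightarrow> 'e \<Rightarrow> ('g \<times> 'g set) \<Rightarrow> ('g \<times> 'g set)" where
  "sdp_act \<alpha> e = (\<lambda>(k, C). (\<alpha> e k, \<alpha> e ` C))"

text \<open>Transport of a character of K0 to the subgroup K0 x {1} of K0 x| (V/H).\<close>
definition emb0 :: "'g set \<Rightarrow> ('g \<Rightarrow> complex) \<Rightarrow> ('g \<times> 'g set \<Rightarrow> complex)" where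
  "emb0 H \<phi> = (\<lambda>(k, C). if C = H then \<phi> k else 0)"

end

theory Submission
  imports Defs "Jordan_Normal_Form.Char_Poly"
begin


lemma ex_eig: fixes A :: "complex mat" assumes A: "A \<in> carrier_mat n n" and n: "0 < n"
  shows "\<exists>a v. v \<in> carrier_vec n \<and> v \<noteq> 0\<^sub>v n \<and> A *\<^sub>v v = a \<cdot>\<^sub>v v"
proof -
  obtain as where cp: "char_poly A = (\<Prod> a \<leftarrow> as. [:- a, 1:])" and l: "length as = n"
    using char_poly_factorized[OF A] by blast
  then obtain a as' where as: "as = a # as'" using n by (cases as) auto
  have "poly (char_poly A) a = 0" unfolding cp as by simp
  hence "eigenvalue A a" using eigenvalue_root_char_poly[OF A] by simp
  then obtain v where "eigenvector A v a" unfolding eigenvalue_def by blast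
  thus ?thesis unfolding eigenvector_def using A by auto
qed

lemma mult_entry:
  assumes "A \<in> carrier_mat n m" "B \<in> carrier_mat m p" "i < n" "j < p"
  shows "(A * B) $$ (i,j) = (\<Sum>k<m. A $$ (i,k) * B $$ (k,j))"
  using assms by (simp add: scalar_prod_def lessThan_atLeast0 mult.commute)

lemma row_col_entry[simp]:
  assumes "A \<in> carrier_mat n m" "B \<in> carrier_mat m p" "i < n" "j < p"
  shows "row A i \<bullet> col B j = (\<Sum>k<m. A $$ (i,k) * B $$ (k,j))"
  using assms by (simp add: scalar_prod_def lessThan_atLeast0 mult.commute)

lemma mult_if_01[simp]: "x * (if P then 1 else 0) = (if P then x else (0::'a::semiring_1))"
  "(if P then 1 else 0) * x = (if P then x else (0::'a::semiring_1))"
  by auto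

lemma if_zero_mult: "(if P then a else 0) * y = (if P then a * y else (0::'a::semiring_0))"
  "y * (if P then a else 0) = (if P then y * a else (0::'a::semiring_0))"
  by auto

lemma smult_one_mult_vec:
  assumes x: "(x :: complex vec) \<in> carrier_vec n"
  shows "(a \<cdot>\<^sub>m 1\<^sub>m n) *\<^sub>v x = a \<cdot>\<^sub>v x"
  using x by (intro eq_vecI) (auto simp: scalar_prod_def if_zero_mult sum.delta cong: if_cong)

lemma mat_trace_mult_comm:
  assumes A: "A \<in> carrier_mat n m" and B: "B \<in> carrier_mat m n"
  shows "mat_trace (A * B) = mat_trace (B * A)"
proof -
  have "mat_trace (A*B) = (\<Sum>i<n. \<Sum>k<m. A $$ (i,k) * B $$ (k,i))"
    using A B by (auto simp: mat_trace_def mult_entry[OF A B] intro!: sum.cong)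
  also have "\<dots> = (\<Sum>k<m. \<Sum>i<n. B $$ (k,i) * A $$ (i,k))"
    by (subst sum.swap) (simp add: mult.commute)
  also have "\<dots> = mat_trace (B*A)"
    using A B by (auto simp: mat_trace_def mult_entry[OF B A] intro!: sum.cong)
  finally show ?thesis .
qed

lemma mat_trace_smult: "A \<in> carrier_mat n n \<Longrightarrow> mat_trace (c \<cdot>\<^sub>m A) = c * mat_trace A"
  by (auto simp: mat_trace_def sum_distrib_left intro!: sum.cong)

lemma mat_trace_one: "mat_trace (1\<^sub>m n) = of_nat n"
  by (simp add: mat_trace_def)

lemma rep_carrier: "is_rep G n \<rho> \<Longrightarrow> g \<in> carrier G \<Longrightarrow> \<rho> g \<in> carrier_mat n n"
  by (simp add: is_rep_def)
lemma rep_mult: "is_rep G n \<rho> \<Longrightarrow> g \<in> carrier G \<Longrightarrow> h \<in> carrier G \<Longrightarrow>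
   \<rho> (g \<otimes>\<^bsub>G\<^esub> h) = \<rho> g * \<rho> h"
  by (simp add: is_rep_def)
lemma rep_one: "is_rep G n \<rho> \<Longrightarrow> \<rho> \<one>\<^bsub>G\<^esub> = 1\<^sub>m n"
  by (simp add: is_rep_def)
lemma rep_pos: "is_rep G n \<rho> \<Longrightarrow> 0 < n"
  by (simp add: is_rep_def)

lemma rep_inv:
  assumes "group G" "is_rep G n \<rho>" "g \<in> carrier G"
  shows "\<rho> (inv\<^bsub>G\<^esub> g) * \<rho> g = 1\<^sub>m n" "\<rho> g * \<rho> (inv\<^bsub>G\<^esub> g) = 1\<^sub>m n"
proof -
  show "\<rho> (inv\<^bsub>G\<^esub> g) * \<rho> g = 1\<^sub>m n"
    using rep_mult[OF assms(2), of "inv\<^bsub>G\<^esub> g" g] assms rep_one[OF assms(2)] group.l_inv group.inv_closed by fastforce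
  show "\<rho> g * \<rho> (inv\<^bsub>G\<^esub> g) = 1\<^sub>m n"
    using rep_mult[OF assms(2), of g "inv\<^bsub>G\<^esub> g"] assms rep_one[OF assms(2)] group.r_inv group.inv_closed by fastforce
qed

lemma rep_trace_conj:
  assumes G: "group G" and r: "is_rep G n \<rho>" and g: "g \<in> carrier G" and x: "x \<in> carrier G"
  shows "mat_trace (\<rho> (g \<otimes>\<^bsub>G\<^esub> x \<otimes>\<^bsub>G\<^esub> inv\<^bsub>G\<^esub> g)) = mat_trace (\<rho> x)"
proof -
  have ig: "inv\<^bsub>G\<^esub> g \<in> carrier G" using G g by (simp add: group.inv_closed)
  have c: "\<rho> g \<in> carrier_mat n n" "\<rho> x \<in> carrier_mat n n" "\<rho> (inv\<^bsub>G\<^esub> g) \<in> carrier_mat n n"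
    using rep_carrier[OF r] g x ig by auto
  have "\<rho> (g \<otimes>\<^bsub>G\<^esub> x \<otimes>\<^bsub>G\<^esub> inv\<^bsub>G\<^esub> g) = \<rho> g * (\<rho> x * \<rho> (inv\<^bsub>G\<^esub> g))"
    using rep_mult[OF r] g x c ig G by (simp add: assoc_mult_mat[of _ n n _ n _ n] monoid.m_closed group.is_monoid)
  hence "mat_trace (\<rho> (g \<otimes>\<^bsub>G\<^esub> x \<otimes>\<^bsub>G\<^esub> inv\<^bsub>G\<^esub> g)) = mat_trace ((\<rho> x * \<rho> (inv\<^bsub>G\<^esub> g)) * \<rho> g)"
    using mat_trace_mult_comm[of "\<rho> g" n n "\<rho> x * \<rho> (inv\<^bsub>G\<^esub> g)"] c by simp
  also have "\<dots> = mat_trace (\<rho> x * (\<rho> (inv\<^bsub>G\<^esub> g) * \<rho> g))"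
    using c by (simp add: assoc_mult_mat[of _ n n _ n _ n])
  also have "\<dots> = mat_trace (\<rho> x)" using rep_inv[OF G r g] c by simp
  finally show ?thesis .
qed

lemma mat_eq_from_vec:
  fixes A B :: "complex mat"
  assumes A: "A \<in> carrier_mat n n" and B: "B \<in> carrier_mat n n"
    and h: "\<And>x. x \<in> carrier_vec n \<Longrightarrow> A *\<^sub>v x = B *\<^sub>v x"
  shows "A = B"
proof (rule eq_matI)
  fix i j assume i: "i < dim_row B" and j: "j < dim_col B"
  have "(A *\<^sub>v unit_vec n j) $ i = (B *\<^sub>v unit_vec n j) $ i" using h[of "unit_vec n j"] by simp
  thus "A $$ (i,j) = B $$ (i,j)" using A B i j
    by (simp add: scalar_prod_def unit_vec_def lessThan_atLeast0 sum.delta' cong: if_cong)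
qed (use A B in auto)

lemma subspace_zero_or:
  assumes "is_subspace n W" "W \<noteq> {0\<^sub>v n}" shows "\<exists>w\<in>W. w \<noteq> 0\<^sub>v n"
  using assms unfolding is_subspace_def by auto

lemma schur:
  assumes irr: "irreducible_rep G n \<rho>" and A: "A \<in> carrier_mat n n"
    and comm: "\<And>g. g \<in> carrier G \<Longrightarrow> A * \<rho> g = \<rho> g * A"
  shows "\<exists>a. A = a \<cdot>\<^sub>m 1\<^sub>m n"
proof -
  have r: "is_rep G n \<rho>" using irr by (simp add: irreducible_rep_def)
  have n: "0 < n" using r by (simp add: is_rep_def)
  obtain a v where v: "v \<in> carrier_vec n" "v \<noteq> 0\<^sub>v n" "A *\<^sub>v v = a \<cdot>\<^sub>v v"
    using ex_eig[OF A n] by blast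
  define W where "W = {x \<in> carrier_vec n. A *\<^sub>v x = a \<cdot>\<^sub>v x}"
  have z: "A *\<^sub>v 0\<^sub>v n = a \<cdot>\<^sub>v 0\<^sub>v n" using A by (intro eq_vecI) (auto simp: scalar_prod_def)
  have ad: "A *\<^sub>v (x + y) = a \<cdot>\<^sub>v (x + y)" if "x \<in> carrier_vec n" "y \<in> carrier_vec n"
     "A *\<^sub>v x = a \<cdot>\<^sub>v x" "A *\<^sub>v y = a \<cdot>\<^sub>v y" for x y
    using A that by (simp add: mult_add_distrib_mat_vec smult_add_distrib_vec)
  have sm: "A *\<^sub>v (c \<cdot>\<^sub>v x) = a \<cdot>\<^sub>v (c \<cdot>\<^sub>v x)" if "x \<in> carrier_vec n"
     "A *\<^sub>v x = a \<cdot>\<^sub>v x" for x c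
    using A that by (simp add: mult_mat_vec smult_smult_assoc mult.commute)
  have sub: "is_subspace n W"
    unfolding is_subspace_def W_def using z ad sm by auto
  have inv: "\<forall>g\<in>carrier G. \<forall>w\<in>W. \<rho> g *\<^sub>v w \<in> W"
  proof (intro ballI)
    fix g w assume g: "g \<in> carrier G" and w: "w \<in> W"
    have rg: "\<rho> g \<in> carrier_mat n n" using rep_carrier[OF r g] .
    have wc: "w \<in> carrier_vec n" "A *\<^sub>v w = a \<cdot>\<^sub>v w" using w by (auto simp: W_def)
    have "A *\<^sub>v (\<rho> g *\<^sub>v w) = (A * \<rho> g) *\<^sub>v w" using A rg wc by simp
    also have "\<dots> = (\<rho> g * A) *\<^sub>v w" using comm[OF g] by simp
    also have "\<dots> = \<rho> g *\<^sub>v (a \<cdot>\<^sub>v w)" using A rg wc by simp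
    also have "\<dots> = a \<cdot>\<^sub>v (\<rho> g *\<^sub>v w)" using rg wc by (simp add: mult_mat_vec)
    finally show "\<rho> g *\<^sub>v w \<in> W" using rg wc by (simp add: W_def)
  qed
  have "W \<noteq> {0\<^sub>v n}" using v by (auto simp: W_def)
  hence "W = carrier_vec n" using irr sub inv unfolding irreducible_rep_def by blast
  hence "\<And>x. x \<in> carrier_vec n \<Longrightarrow> A *\<^sub>v x = (a \<cdot>\<^sub>m 1\<^sub>m n) *\<^sub>v x"
    by (auto simp: W_def smult_one_mult_vec)
  hence "A = a \<cdot>\<^sub>m 1\<^sub>m n" using mat_eq_from_vec[OF A] by auto
  thus ?thesis by blast
qed


definition msum :: "nat \<Rightarrow> 'a set \<Rightarrow> ('a \<Rightarrow> complex mat) \<Rightarrow> complex mat" where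
  "msum n S f = mat n n (\<lambda>ij. \<Sum>s\<in>S. f s $$ ij)"

lemma msum_carrier[simp]: "msum n S f \<in> carrier_mat n n" by (simp add: msum_def)
lemma msum_dim[simp]: "dim_row (msum n S f) = n" "dim_col (msum n S f) = n" by (simp_all add: msum_def)
lemma msum_index: "i < n \<Longrightarrow> j < n \<Longrightarrow> msum n S f $$ (i,j) = (\<Sum>s\<in>S. f s $$ (i,j))"
  by (simp add: msum_def)
lemma msum_cong: "(\<And>s. s \<in> S \<Longrightarrow> f s = g s) \<Longrightarrow> msum n S f = msum n S g"
  unfolding msum_def by (intro cong_mat refl sum.cong) auto

lemma msum_mult_left:
  assumes A: "A \<in> carrier_mat n n" and f: "\<And>s. s\<in>S \<Longrightarrow> f s \<in> carrier_mat n n"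
  shows "A * msum n S f = msum n S (\<lambda>s. A * f s)"
proof (rule eq_matI)
  fix i j assume "i < dim_row (msum n S (\<lambda>s. A * f s))" "j < dim_col (msum n S (\<lambda>s. A * f s))"
  hence ij: "i < n" "j < n" by auto
  have "(A * msum n S f) $$ (i,j) = (\<Sum>k<n. A $$ (i,k) * (\<Sum>s\<in>S. f s $$ (k,j)))"
    using A ij by (simp add: row_col_entry[OF A msum_carrier] msum_index)
  also have "\<dots> = (\<Sum>s\<in>S. \<Sum>k<n. A $$ (i,k) * f s $$ (k,j))"
    by (simp add: sum_distrib_left) (rule sum.swap)
  also have "\<dots> = (\<Sum>s\<in>S. (A * f s) $$ (i,j))"
    using ij by (intro sum.cong refl) (simp add: mult_entry[OF A f])
  also have "\<dots> = msum n S (\<lambda>s. A * f s) $$ (i,j)" using ij by (simp add: msum_index)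
  finally show "(A * msum n S f) $$ (i,j) = msum n S (\<lambda>s. A * f s) $$ (i,j)" .
qed (use A in auto)

lemma msum_mult_right:
  assumes A: "A \<in> carrier_mat n n" and f: "\<And>s. s\<in>S \<Longrightarrow> f s \<in> carrier_mat n n"
  shows "msum n S f * A = msum n S (\<lambda>s. f s * A)"
proof (rule eq_matI)
  fix i j assume "i < dim_row (msum n S (\<lambda>s. f s * A))" "j < dim_col (msum n S (\<lambda>s. f s * A))"
  hence ij: "i < n" "j < n" by auto
  have "(msum n S f * A) $$ (i,j) = (\<Sum>k<n. (\<Sum>s\<in>S. f s $$ (i,k)) * A $$ (k,j))"
    using A ij by (simp add: row_col_entry[OF msum_carrier A] msum_index)
  also have "\<dots> = (\<Sum>s\<in>S. \<Sum>k<n. f s $$ (i,k) * A $$ (k,j))"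
    by (simp add: sum_distrib_right) (rule sum.swap)
  also have "\<dots> = (\<Sum>s\<in>S. (f s * A) $$ (i,j))"
    using ij by (intro sum.cong refl) (simp add: mult_entry[OF f A])
  also have "\<dots> = msum n S (\<lambda>s. f s * A) $$ (i,j)" using ij by (simp add: msum_index)
  finally show "(msum n S f * A) $$ (i,j) = msum n S (\<lambda>s. f s * A) $$ (i,j)" .
qed (use A in auto)

lemma msum_trace:
  assumes f: "\<And>s. s\<in>S \<Longrightarrow> f s \<in> carrier_mat n n"
  shows "mat_trace (msum n S f) = (\<Sum>s\<in>S. mat_trace (f s))"
proof -
  have "mat_trace (msum n S f) = (\<Sum>i<n. \<Sum>s\<in>S. f s $$ (i,i))"
    by (simp add: mat_trace_def msum_index)
  also have "\<dots> = (\<Sum>s\<in>S. \<Sum>i<n. f s $$ (i,i))" by (rule sum.swap)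
  also have "\<dots> = (\<Sum>s\<in>S. mat_trace (f s))" using f by (auto simp: mat_trace_def intro!: sum.cong)
  finally show ?thesis .
qed

lemma msum_reindex:
  assumes "bij_betw h S S" shows "msum n S (\<lambda>s. f (h s)) = msum n S f"
  unfolding msum_def using sum.reindex_bij_betw[OF assms, of "\<lambda>s. f s $$ _"]
  by (intro cong_mat refl) auto

lemma group_lmult_bij:
  assumes G: "group G" and h: "h \<in> carrier G"
  shows "bij_betw (\<lambda>g. h \<otimes>\<^bsub>G\<^esub> g) (carrier G) (carrier G)"
proof -
  interpret group G by fact
  show ?thesis
  proof (rule bij_betwI[where g = "\<lambda>g. inv\<^bsub>G\<^esub> h \<otimes>\<^bsub>G\<^esub> g"])
    show "(\<lambda>g. h \<otimes>\<^bsub>G\<^esub> g) \<in> carrier G \<rightarrow> carrier G" using h by auto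
    show "(\<lambda>g. inv\<^bsub>G\<^esub> h \<otimes>\<^bsub>G\<^esub> g) \<in> carrier G \<rightarrow> carrier G" using h by auto
    show "\<And>g. g \<in> carrier G \<Longrightarrow> inv\<^bsub>G\<^esub> h \<otimes>\<^bsub>G\<^esub> (h \<otimes>\<^bsub>G\<^esub> g) = g"
      by (metis h inv_closed l_inv l_one m_assoc)
    show "\<And>g. g \<in> carrier G \<Longrightarrow> h \<otimes>\<^bsub>G\<^esub> (inv\<^bsub>G\<^esub> h \<otimes>\<^bsub>G\<^esub> g) = g"
      by (metis h inv_closed r_inv l_one m_assoc)
  qed
qed

definition Pm :: "('g,'b) monoid_scheme \<Rightarrow> nat \<Rightarrow> ('g \<Rightarrow> complex mat) \<Rightarrow> ('g \<Rightarrow> complex mat)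
   \<Rightarrow> complex mat \<Rightarrow> complex mat" where
  "Pm G n \<sigma> \<tau> Y = msum n (carrier G) (\<lambda>g. \<sigma> g * Y * \<tau> (inv\<^bsub>G\<^esub> g))"

lemma Pm_carrier[simp]: "Pm G n \<sigma> \<tau> Y \<in> carrier_mat n n" by (simp add: Pm_def)

lemma Pm_intertwine:
  assumes G: "group G" and s: "is_rep G n \<sigma>" and t: "is_rep G n \<tau>"
    and Y: "Y \<in> carrier_mat n n" and h: "h \<in> carrier G"
  shows "\<sigma> h * Pm G n \<sigma> \<tau> Y = Pm G n \<sigma> \<tau> Y * \<tau> h"
proof -
  interpret group G by fact
  have sc: "\<And>g. g \<in> carrier G \<Longrightarrow> \<sigma> g \<in> carrier_mat n n" by (rule rep_carrier[OF s])
  have tc: "\<And>g. g \<in> carrier G \<Longrightarrow> \<tau> g \<in> carrier_mat n n" by (rule rep_carrier[OF t])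
  have "\<sigma> h * Pm G n \<sigma> \<tau> Y = msum n (carrier G) (\<lambda>g. \<sigma> h * (\<sigma> g * Y * \<tau> (inv\<^bsub>G\<^esub> g)))"
    unfolding Pm_def using h Y by (intro msum_mult_left) (auto intro!: mult_carrier_mat sc tc)
  also have "\<dots> = msum n (carrier G) (\<lambda>g. \<sigma> (h \<otimes>\<^bsub>G\<^esub> g) * Y * \<tau> (inv\<^bsub>G\<^esub> g))"
  proof (intro msum_cong)
    fix g assume g: "g \<in> carrier G"
    have "\<sigma> (h \<otimes>\<^bsub>G\<^esub> g) = \<sigma> h * \<sigma> g" using rep_mult[OF s h g] .
    thus "\<sigma> h * (\<sigma> g * Y * \<tau> (inv\<^bsub>G\<^esub> g)) = \<sigma> (h \<otimes>\<^bsub>G\<^esub> g) * Y * \<tau> (inv\<^bsub>G\<^esub> g)"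
      using sc[OF h] sc[OF g] tc[of "inv\<^bsub>G\<^esub> g"] g Y
      by (simp add: assoc_mult_mat[of _ n n _ n _ n])
  qed
  also have "\<dots> = msum n (carrier G) (\<lambda>g. \<sigma> (h \<otimes>\<^bsub>G\<^esub> g) * Y * \<tau> (inv\<^bsub>G\<^esub> (h \<otimes>\<^bsub>G\<^esub> g) \<otimes>\<^bsub>G\<^esub> h))"
  proof (intro msum_cong)
    fix g assume g: "g \<in> carrier G"
    have "inv\<^bsub>G\<^esub> (h \<otimes>\<^bsub>G\<^esub> g) \<otimes>\<^bsub>G\<^esub> h = inv\<^bsub>G\<^esub> g"
      using g h by (simp add: inv_mult_group m_assoc)
    thus "\<sigma> (h \<otimes>\<^bsub>G\<^esub> g) * Y * \<tau> (inv\<^bsub>G\<^esub> g) = \<sigma> (h \<otimes>\<^bsub>G\<^esub> g) * Y * \<tau> (inv\<^bsub>G\<^esub> (h \<otimes>\<^bsub>G\<^esub> g) \<otimes>\<^bsub>G\<^esub> h)"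
      by simp
  qed
  also have "\<dots> = msum n (carrier G) (\<lambda>g. \<sigma> g * Y * \<tau> (inv\<^bsub>G\<^esub> g \<otimes>\<^bsub>G\<^esub> h))"
    using msum_reindex[OF group_lmult_bij[OF G h], of n "\<lambda>g. \<sigma> g * Y * \<tau> (inv\<^bsub>G\<^esub> g \<otimes>\<^bsub>G\<^esub> h)"] by simp
  also have "\<dots> = msum n (carrier G) (\<lambda>g. \<sigma> g * Y * \<tau> (inv\<^bsub>G\<^esub> g) * \<tau> h)"
  proof (intro msum_cong)
    fix g assume g: "g \<in> carrier G"
    have ig: "inv\<^bsub>G\<^esub> g \<in> carrier G" using g by simp
    have "\<tau> (inv\<^bsub>G\<^esub> g \<otimes>\<^bsub>G\<^esub> h) = \<tau> (inv\<^bsub>G\<^esub> g) * \<tau> h" using rep_mult[OF t ig h] .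
    thus "\<sigma> g * Y * \<tau> (inv\<^bsub>G\<^esub> g \<otimes>\<^bsub>G\<^esub> h) = \<sigma> g * Y * \<tau> (inv\<^bsub>G\<^esub> g) * \<tau> h"
      using sc[OF g] tc[OF ig] tc[OF h] Y
      by (simp add: assoc_mult_mat[of _ n n _ n _ n])
  qed
  also have "\<dots> = Pm G n \<sigma> \<tau> Y * \<tau> h"
    unfolding Pm_def using h Y by (intro msum_mult_right[symmetric]) (auto intro!: mult_carrier_mat sc tc)
  finally show ?thesis .
qed


definition Emat :: "nat \<Rightarrow> nat \<Rightarrow> nat \<Rightarrow> complex mat" where
  "Emat n i j = mat n n (\<lambda>(k,l). if k = i \<and> l = j then 1 else 0)"

lemma Emat_carrier[simp]: "Emat n i j \<in> carrier_mat n n" by (simp add: Emat_def)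

lemma Emat_entry:
  assumes A: "A \<in> carrier_mat n n" and B: "B \<in> carrier_mat n n" and i: "i < n" and j: "j < n"
  shows "(A * Emat n i j * B) $$ (i,j) = A $$ (i,i) * B $$ (j,j)"
proof -
  have AE: "A * Emat n i j \<in> carrier_mat n n" using A by simp
  have e1: "(A * Emat n i j) $$ (i,l) = (if l = j then A $$ (i,i) else 0)" if l: "l < n" for l
  proof -
    have "(A * Emat n i j) $$ (i,l) = (\<Sum>k<n. A $$ (i,k) * Emat n i j $$ (k,l))"
      by (rule mult_entry[OF A Emat_carrier i l])
    also have "\<dots> = (\<Sum>k<n. if k = i then (if l = j then A $$ (i,i) else 0) else 0)"
      using l by (intro sum.cong refl) (auto simp: Emat_def)
    also have "\<dots> = (if l = j then A $$ (i,i) else 0)" using i by (simp add: sum.delta)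
    finally show ?thesis .
  qed
  have "(A * Emat n i j * B) $$ (i,j) = (\<Sum>l<n. (A * Emat n i j) $$ (i,l) * B $$ (l,j))"
    by (rule mult_entry[OF AE B i j])
  also have "\<dots> = (\<Sum>l<n. if l = j then A $$ (i,i) * B $$ (l,j) else 0)"
    by (intro sum.cong refl) (simp add: e1)
  also have "\<dots> = A $$ (i,i) * B $$ (j,j)" using j by (simp add: sum.delta)
  finally show ?thesis .
qed

lemma Emat_trace: assumes "i < n" "j < n"
  shows "mat_trace (Emat n i j) = (if i = j then 1 else 0)"
proof (cases "i = j")
  case True
  have "mat_trace (Emat n i j) = (\<Sum>k<n. if k = i then 1 else 0)"
    unfolding mat_trace_def Emat_def using True by (intro sum.cong) auto
  thus ?thesis using assms True by (simp add: sum.delta)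
next
  case False
  have "mat_trace (Emat n i j) = (\<Sum>k<n. 0)"
    unfolding mat_trace_def Emat_def using False by (intro sum.cong) auto
  thus ?thesis using False by simp
qed

lemma Pm_diag_sum:
  assumes G: "group G" and s: "is_rep G n \<sigma>" and t: "is_rep G n \<tau>"
  shows "(\<Sum>i<n. \<Sum>j<n. Pm G n \<sigma> \<tau> (Emat n i j) $$ (i,j))
       = (\<Sum>g\<in>carrier G. mat_trace (\<sigma> g) * mat_trace (\<tau> (inv\<^bsub>G\<^esub> g)))"
proof -
  have sc: "\<And>g. g \<in> carrier G \<Longrightarrow> \<sigma> g \<in> carrier_mat n n" by (rule rep_carrier[OF s])
  have tc: "\<And>g. g \<in> carrier G \<Longrightarrow> \<tau> (inv\<^bsub>G\<^esub> g) \<in> carrier_mat n n"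
    by (rule rep_carrier[OF t]) (simp add: G group.inv_closed)
  have "(\<Sum>i<n. \<Sum>j<n. Pm G n \<sigma> \<tau> (Emat n i j) $$ (i,j))
      = (\<Sum>i<n. \<Sum>j<n. \<Sum>g\<in>carrier G. \<sigma> g $$ (i,i) * \<tau> (inv\<^bsub>G\<^esub> g) $$ (j,j))"
    unfolding Pm_def by (intro sum.cong refl) (simp add: msum_index Emat_entry[OF sc tc])
  also have "\<dots> = (\<Sum>i<n. \<Sum>g\<in>carrier G. \<Sum>j<n. \<sigma> g $$ (i,i) * \<tau> (inv\<^bsub>G\<^esub> g) $$ (j,j))"
    by (intro sum.cong refl) (rule sum.swap)
  also have "\<dots> = (\<Sum>g\<in>carrier G. \<Sum>i<n. \<Sum>j<n. \<sigma> g $$ (i,i) * \<tau> (inv\<^bsub>G\<^esub> g) $$ (j,j))"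
    by (rule sum.swap)
  also have "\<dots> = (\<Sum>g\<in>carrier G. mat_trace (\<sigma> g) * mat_trace (\<tau> (inv\<^bsub>G\<^esub> g)))"
  proof (intro sum.cong refl)
    fix g assume g: "g \<in> carrier G"
    show "(\<Sum>i<n. \<Sum>j<n. \<sigma> g $$ (i,i) * \<tau> (inv\<^bsub>G\<^esub> g) $$ (j,j))
       = mat_trace (\<sigma> g) * mat_trace (\<tau> (inv\<^bsub>G\<^esub> g))"
      using sc[OF g] tc[OF g] by (simp add: mat_trace_def sum_product)
  qed
  finally show ?thesis .
qed

lemma Pm_self_scalar:
  assumes G: "group G" and irr: "irreducible_rep G n \<tau>" and i: "i < n" and j: "j < n"
  shows "Pm G n \<tau> \<tau> (Emat n i j)
     = (of_nat (card (carrier G)) * (if i = j then 1 else 0) / of_nat n) \<cdot>\<^sub>m 1\<^sub>m n"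
proof -
  have t: "is_rep G n \<tau>" using irr by (simp add: irreducible_rep_def)
  have n: "0 < n" using rep_pos[OF t] .
  have tc: "\<And>g. g \<in> carrier G \<Longrightarrow> \<tau> g \<in> carrier_mat n n" by (rule rep_carrier[OF t])
  have itc: "\<And>g. g \<in> carrier G \<Longrightarrow> \<tau> (inv\<^bsub>G\<^esub> g) \<in> carrier_mat n n"
    by (rule rep_carrier[OF t]) (simp add: G group.inv_closed)
  obtain c where c: "Pm G n \<tau> \<tau> (Emat n i j) = c \<cdot>\<^sub>m 1\<^sub>m n"
    using schur[OF irr Pm_carrier] Pm_intertwine[OF G t t Emat_carrier] by metis
  have "mat_trace (Pm G n \<tau> \<tau> (Emat n i j))
      = (\<Sum>g\<in>carrier G. mat_trace (\<tau> g * Emat n i j * \<tau> (inv\<^bsub>G\<^esub> g)))"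
    unfolding Pm_def by (rule msum_trace) (auto intro!: mult_carrier_mat tc itc)
  also have "\<dots> = (\<Sum>g\<in>carrier G. mat_trace (Emat n i j))"
  proof (intro sum.cong refl)
    fix g assume g: "g \<in> carrier G"
    have "mat_trace (\<tau> g * Emat n i j * \<tau> (inv\<^bsub>G\<^esub> g)) = mat_trace (\<tau> (inv\<^bsub>G\<^esub> g) * (\<tau> g * Emat n i j))"
      by (rule mat_trace_mult_comm[of _ n n]) (auto intro!: mult_carrier_mat tc itc g)
    also have "\<dots> = mat_trace ((\<tau> (inv\<^bsub>G\<^esub> g) * \<tau> g) * Emat n i j)"
      using tc[OF g] itc[OF g] by (simp add: assoc_mult_mat[of _ n n _ n _ n])
    also have "\<dots> = mat_trace (Emat n i j)" using rep_inv[OF G t g] left_mult_one_mat[OF Emat_carrier[of n i j]] by simp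
    finally show "mat_trace (\<tau> g * Emat n i j * \<tau> (inv\<^bsub>G\<^esub> g)) = mat_trace (Emat n i j)" .
  qed
  also have "\<dots> = of_nat (card (carrier G)) * (if i = j then 1 else 0)"
    using Emat_trace[OF i j] by simp
  finally have "c * of_nat n = of_nat (card (carrier G)) * (if i = j then 1 else 0)"
    using c by (simp add: mat_trace_smult[of "1\<^sub>m n" n] mat_trace_one)
  hence "c = of_nat (card (carrier G)) * (if i = j then 1 else 0) / of_nat n"
    using n by (simp add: field_simps)
  thus ?thesis using c by simp
qed

lemma Pm_self_sum:
  assumes G: "group G" and irr: "irreducible_rep G n \<tau>"
  shows "(\<Sum>i<n. \<Sum>j<n. Pm G n \<tau> \<tau> (Emat n i j) $$ (i,j)) = of_nat (card (carrier G))"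
proof -
  have n: "0 < n" using irr by (simp add: irreducible_rep_def is_rep_def)
  have "(\<Sum>i<n. \<Sum>j<n. Pm G n \<tau> \<tau> (Emat n i j) $$ (i,j))
      = (\<Sum>i<n. \<Sum>j<n. if j = i then of_nat (card (carrier G)) / of_nat n else 0)"
    by (intro sum.cong refl) (auto simp: Pm_self_scalar[OF G irr])
  also have "\<dots> = (\<Sum>i<n. of_nat (card (carrier G)) / (of_nat n :: complex))"
    by (intro sum.cong refl) (simp add: sum.delta)
  also have "\<dots> = of_nat (card (carrier G))" using n by simp
  finally show ?thesis .
qed

lemma mat_vec_zero: "A \<in> carrier_mat nr n \<Longrightarrow> A *\<^sub>v 0\<^sub>v n = (0\<^sub>v nr :: complex vec)"
  by (intro eq_vecI) (auto simp: scalar_prod_def)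

lemma smult_vec_zero: "c \<cdot>\<^sub>v 0\<^sub>v n = (0\<^sub>v n :: complex vec)"
  by (intro eq_vecI) auto

lemma irr_dichotomy:
  "irreducible_rep G n \<rho> \<Longrightarrow> is_subspace n W \<Longrightarrow> (\<forall>g\<in>carrier G. \<forall>w\<in>W. \<rho> g *\<^sub>v w \<in> W)
   \<Longrightarrow> W = {0\<^sub>v n} \<or> W = carrier_vec n"
  by (simp add: irreducible_rep_def)

lemma intertwiner_irred:
  assumes tau: "irreducible_rep G n \<tau>" and sig: "is_rep G n \<sigma>"
    and T: "T \<in> carrier_mat n n" and T0: "T \<noteq> 0\<^sub>m n n"
    and it: "\<And>h. h \<in> carrier G \<Longrightarrow> \<sigma> h * T = T * \<tau> h"
  shows "irreducible_rep G n \<sigma>"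
proof -
  have t: "is_rep G n \<tau>" using tau by (simp add: irreducible_rep_def)
  define Kr where "Kr = {x \<in> carrier_vec n. T *\<^sub>v x = 0\<^sub>v n}"
  have subK: "is_subspace n Kr"
    unfolding is_subspace_def Kr_def
    using T by (auto simp: mat_vec_zero mult_add_distrib_mat_vec mult_mat_vec smult_vec_zero)
  have invK: "\<forall>g\<in>carrier G. \<forall>w\<in>Kr. \<tau> g *\<^sub>v w \<in> Kr"
  proof (intro ballI)
    fix g w assume g: "g \<in> carrier G" and w: "w \<in> Kr"
    have tg: "\<tau> g \<in> carrier_mat n n" "\<sigma> g \<in> carrier_mat n n"
      using rep_carrier[OF t g] rep_carrier[OF sig g] by auto
    have wc: "w \<in> carrier_vec n" "T *\<^sub>v w = 0\<^sub>v n" using w by (auto simp: Kr_def)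
    have "T *\<^sub>v (\<tau> g *\<^sub>v w) = (T * \<tau> g) *\<^sub>v w" using T tg wc by simp
    also have "\<dots> = (\<sigma> g * T) *\<^sub>v w" using it[OF g] by simp
    also have "\<dots> = \<sigma> g *\<^sub>v (T *\<^sub>v w)" using T tg wc by simp
    also have "\<dots> = 0\<^sub>v n" using wc tg by (simp add: mat_vec_zero)
    finally show "\<tau> g *\<^sub>v w \<in> Kr" using tg wc by (simp add: Kr_def)
  qed
  have "Kr \<noteq> carrier_vec n"
  proof
    assume "Kr = carrier_vec n"
    have z: "\<And>x. x \<in> carrier_vec n \<Longrightarrow> 0\<^sub>m n n *\<^sub>v x = (0\<^sub>v n :: complex vec)"
      by (intro eq_vecI) (auto simp: scalar_prod_def)
    have "T *\<^sub>v x = 0\<^sub>m n n *\<^sub>v x" if x: "x \<in> carrier_vec n" for x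
    proof -
      have "x \<in> Kr" using \<open>Kr = carrier_vec n\<close> x by simp
      hence "T *\<^sub>v x = 0\<^sub>v n" by (simp add: Kr_def)
      thus ?thesis using z[OF x] by simp
    qed
    hence "T = 0\<^sub>m n n" using mat_eq_from_vec[OF T zero_carrier_mat] by auto
    thus False using T0 by simp
  qed
  hence Kr0: "Kr = {0\<^sub>v n}" using irr_dichotomy[OF tau subK invK] by simp
  have "det T \<noteq> 0"
  proof
    assume "det T = 0"
    then obtain v where "v \<in> carrier_vec n" "v \<noteq> 0\<^sub>v n" "T *\<^sub>v v = 0\<^sub>v n"
      using det_0_iff_vec_prod_zero[OF T] by blast
    hence "v \<in> Kr" by (simp add: Kr_def)
    thus False using Kr0 \<open>v \<noteq> 0\<^sub>v n\<close> by simp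
  qed
  from det_non_zero_imp_unit[OF T this, of "()"]
  obtain Ti where Ti: "Ti \<in> carrier_mat n n" "Ti * T = 1\<^sub>m n" "T * Ti = 1\<^sub>m n"
    unfolding Units_def ring_mat_def by auto
  show ?thesis unfolding irreducible_rep_def
  proof (intro conjI sig allI impI)
    fix W assume W: "is_subspace n W \<and> (\<forall>g\<in>carrier G. \<forall>w\<in>W. \<sigma> g *\<^sub>v w \<in> W)"
    define W' where "W' = {x \<in> carrier_vec n. T *\<^sub>v x \<in> W}"
    have Wc: "W \<subseteq> carrier_vec n" "0\<^sub>v n \<in> W" "\<And>v w. v \<in> W \<Longrightarrow> w \<in> W \<Longrightarrow> v + w \<in> W"
       "\<And>c v. v \<in> W \<Longrightarrow> c \<cdot>\<^sub>v v \<in> W"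
      using W by (auto simp: is_subspace_def)
    have subW2: "is_subspace n W'"
      unfolding is_subspace_def W'_def
      using T Wc by (auto simp: mat_vec_zero mult_add_distrib_mat_vec mult_mat_vec)
    have invW2: "\<forall>g\<in>carrier G. \<forall>w\<in>W'. \<tau> g *\<^sub>v w \<in> W'"
    proof (intro ballI)
      fix g w assume g: "g \<in> carrier G" and w: "w \<in> W'"
      have tg: "\<tau> g \<in> carrier_mat n n" "\<sigma> g \<in> carrier_mat n n"
        using rep_carrier[OF t g] rep_carrier[OF sig g] by auto
      have wc: "w \<in> carrier_vec n" "T *\<^sub>v w \<in> W" using w by (auto simp: W'_def)
      have "T *\<^sub>v (\<tau> g *\<^sub>v w) = (T * \<tau> g) *\<^sub>v w" using T tg wc by simp
      also have "\<dots> = (\<sigma> g * T) *\<^sub>v w" using it[OF g] by simp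
      also have "\<dots> = \<sigma> g *\<^sub>v (T *\<^sub>v w)" using T tg wc by simp
      finally have "T *\<^sub>v (\<tau> g *\<^sub>v w) \<in> W" using W g wc by auto
      thus "\<tau> g *\<^sub>v w \<in> W'" using tg wc by (simp add: W'_def)
    qed
    have bk: "\<And>w. w \<in> carrier_vec n \<Longrightarrow> T *\<^sub>v (Ti *\<^sub>v w) = w"
      using T Ti by (simp add: assoc_mult_mat_vec[symmetric])
    have "W' = {0\<^sub>v n} \<or> W' = carrier_vec n" by (rule irr_dichotomy[OF tau subW2 invW2])
    thus "W = {0\<^sub>v n} \<or> W = carrier_vec n"
    proof
      assume W'0: "W' = {0\<^sub>v n}"
      have "W \<subseteq> {0\<^sub>v n}"
      proof
        fix w assume w: "w \<in> W"
        hence wc: "w \<in> carrier_vec n" using Wc by auto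
        have "Ti *\<^sub>v w \<in> W'" using bk[OF wc] w wc Ti by (simp add: W'_def)
        hence "Ti *\<^sub>v w = 0\<^sub>v n" using W'0 by simp
        hence "w = T *\<^sub>v 0\<^sub>v n" using bk[OF wc] by simp
        thus "w \<in> {0\<^sub>v n}" using T by (simp add: mat_vec_zero)
      qed
      thus ?thesis using Wc by auto
    next
      assume W'1: "W' = carrier_vec n"
      have "(carrier_vec n :: complex vec set) \<subseteq> W"
      proof
        fix w :: "complex vec" assume wc: "w \<in> carrier_vec n"
        have "Ti *\<^sub>v w \<in> W'" using W'1 Ti wc by simp
        thus "w \<in> W" using bk[OF wc] by (simp add: W'_def)
      qed
      thus ?thesis using Wc by auto
    qed
  qed
qed

lemma char_irred:
  assumes G: "group G" and fin: "finite (carrier G)"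
    and tau: "irreducible_rep G n \<tau>" and sig: "is_rep G m \<sigma>"
    and tr: "\<And>g. g \<in> carrier G \<Longrightarrow> mat_trace (\<sigma> g) = mat_trace (\<tau> g)"
  shows "irreducible_rep G m \<sigma>"
proof -
  have t: "is_rep G n \<tau>" using tau by (simp add: irreducible_rep_def)
  have one: "\<one>\<^bsub>G\<^esub> \<in> carrier G" using G by (simp add: group.is_monoid monoid.one_closed)
  have "mat_trace (1\<^sub>m m) = mat_trace (1\<^sub>m n)"
    using tr[OF one] rep_one[OF sig] rep_one[OF t] by simp
  hence mn: "m = n" by (simp add: mat_trace_one)
  have sig': "is_rep G n \<sigma>" using sig mn by simp
  have card: "card (carrier G) \<noteq> 0" using fin one by auto
  have "(\<Sum>i<n. \<Sum>j<n. Pm G n \<sigma> \<tau> (Emat n i j) $$ (i,j))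
      = (\<Sum>g\<in>carrier G. mat_trace (\<sigma> g) * mat_trace (\<tau> (inv\<^bsub>G\<^esub> g)))"
    by (rule Pm_diag_sum[OF G sig' t])
  also have "\<dots> = (\<Sum>g\<in>carrier G. mat_trace (\<tau> g) * mat_trace (\<tau> (inv\<^bsub>G\<^esub> g)))"
    using tr by simp
  also have "\<dots> = (\<Sum>i<n. \<Sum>j<n. Pm G n \<tau> \<tau> (Emat n i j) $$ (i,j))"
    by (rule Pm_diag_sum[OF G t t, symmetric])
  also have "\<dots> = of_nat (card (carrier G))" by (rule Pm_self_sum[OF G tau])
  finally have S: "(\<Sum>i<n. \<Sum>j<n. Pm G n \<sigma> \<tau> (Emat n i j) $$ (i,j)) \<noteq> 0" using card by simp
  have "\<exists>i<n. \<exists>j<n. Pm G n \<sigma> \<tau> (Emat n i j) \<noteq> 0\<^sub>m n n"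
  proof (rule ccontr)
    assume "\<not> ?thesis"
    hence "\<And>i j. i < n \<Longrightarrow> j < n \<Longrightarrow> Pm G n \<sigma> \<tau> (Emat n i j) $$ (i,j) = 0" by auto
    hence "(\<Sum>i<n. \<Sum>j<n. Pm G n \<sigma> \<tau> (Emat n i j) $$ (i,j)) = 0" by simp
    thus False using S by simp
  qed
  then obtain i j where "i < n" "j < n" and T0: "Pm G n \<sigma> \<tau> (Emat n i j) \<noteq> 0\<^sub>m n n" by blast
  have "irreducible_rep G n \<sigma>"
    by (rule intertwiner_irred[OF tau sig' Pm_carrier T0])
       (rule Pm_intertwine[OF G sig' t Emat_carrier])
  thus ?thesis using mn by simp
qed


lemma conjc_comp:
  assumes G: "group G" and a: "a \<in> carrier G" and b: "b \<in> carrier G"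
  shows "conjc G a (conjc G b f) = conjc G (a \<otimes>\<^bsub>G\<^esub> b) f"
proof
  fix x
  interpret group G by fact
  show "conjc G a (conjc G b f) x = conjc G (a \<otimes>\<^bsub>G\<^esub> b) f x"
    using a b by (simp add: conjc_def inv_mult_group m_assoc)
qed

lemma conjc_one:
  assumes G: "group G" and f: "\<And>x. x \<notin> carrier G \<Longrightarrow> f x = 0"
  shows "conjc G \<one>\<^bsub>G\<^esub> f = f"
proof
  fix x
  interpret group G by fact
  show "conjc G \<one>\<^bsub>G\<^esub> f x = f x" using f by (simp add: conjc_def)
qed

lemma conjc_vanish: "x \<notin> carrier G \<Longrightarrow> conjc G g f x = 0"
  by (simp add: conjc_def)

lemma stab_subgroup:
  assumes G: "group G" and f: "\<And>x. x \<notin> carrier G \<Longrightarrow> f x = 0"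
  shows "subgroup (stab G f) G"
proof -
  interpret group G by fact
  show ?thesis
  proof (rule subgroupI)
    show "stab G f \<subseteq> carrier G" by (auto simp: stab_def)
    show "stab G f \<noteq> {}" using conjc_one[OF G f] by (auto simp: stab_def)
  next
    fix a assume a: "a \<in> stab G f"
    hence ac: "a \<in> carrier G" and fa: "conjc G a f = f" by (auto simp: stab_def)
    have "conjc G (inv\<^bsub>G\<^esub> a) f = conjc G (inv\<^bsub>G\<^esub> a) (conjc G a f)" using fa by simp
    also have "\<dots> = conjc G \<one>\<^bsub>G\<^esub> f" using ac by (simp add: conjc_comp[OF G])
    also have "\<dots> = f" by (rule conjc_one[OF G f])
    finally show "inv\<^bsub>G\<^esub> a \<in> stab G f" using ac by (simp add: stab_def)
  next
    fix a b assume a: "a \<in> stab G f" and b: "b \<in> stab G f"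
    hence "a \<in> carrier G" "b \<in> carrier G" "conjc G a f = f" "conjc G b f = f" by (auto simp: stab_def)
    thus "a \<otimes>\<^bsub>G\<^esub> b \<in> stab G f" by (simp add: stab_def conjc_comp[OF G, symmetric])
  qed
qed

locale setting =
  fixes M :: "('g, 'b) monoid_scheme" (structure) and E :: "('e, 'c) monoid_scheme"
    and \<alpha> :: "'e \<Rightarrow> 'g \<Rightarrow> 'g"
    and K K0 V :: "'g set" and KK :: "('g \<Rightarrow> complex) set"
    and \<Lambda>0 :: "('g \<Rightarrow> complex) \<Rightarrow> ('g \<Rightarrow> complex)"
    and \<Lambda>e :: "('g \<times> 'g set \<Rightarrow> complex) \<Rightarrow> ('g \<times> 'g set \<Rightarrow> complex)"
  assumes grp: "group M" and fin: "finite (carrier M)"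
    and Knorm: "K \<lhd> M" and K0norm: "K0 \<lhd> M" and K0K: "K0 \<subseteq> K"
    and act: "acts_by_auts E M \<alpha>"
    and aK: "\<forall>e\<in>carrier E. \<alpha> e ` K = K" and aK0: "\<forall>e\<in>carrier E. \<alpha> e ` K0 = K0"
    and KKirr: "KK \<subseteq> Irr (M\<lparr>carrier := K\<rparr>)"
    and KKconj: "\<forall>m\<in>carrier M. \<forall>\<chi>\<in>KK. conjc M m \<chi> \<in> KK"
    and KKaut: "\<forall>e\<in>carrier E. \<forall>\<chi>\<in>KK. autc M E \<alpha> e \<chi> \<in> KK"
    and ZK0: "K = center M K <#>\<^bsub>M\<^esub> K0"
    and Vsub: "subgroup V M" and aV: "\<forall>e\<in>carrier E. \<alpha> e ` V = V"
    and MKV: "carrier M = K <#>\<^bsub>M\<^esub> V" and HZ: "V \<inter> K \<subseteq> center M K"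
    and L0: "ext_map (M\<lparr>carrier := V\<rparr>) (V \<inter> K) (\<Union>\<chi>\<in>KK. Irr_under M (V \<inter> K) \<chi>) \<Lambda>0"
    and L0c: "conj_equivariant (M\<lparr>carrier := V\<rparr>) V (\<Union>\<chi>\<in>KK. Irr_under M (V \<inter> K) \<chi>) \<Lambda>0"
    and L0a: "aut_equivariant (M\<lparr>carrier := V\<rparr>) E \<alpha> (\<Union>\<chi>\<in>KK. Irr_under M (V \<inter> K) \<chi>) \<Lambda>0"
    and Le: "ext_map (sdp M K0 V (V \<inter> K)) (K0 \<times> {V \<inter> K})
                      (emb0 (V \<inter> K) ` (\<Union>\<chi>\<in>KK. Irr_under M K0 \<chi>)) \<Lambda>e"
    and Lec: "conj_equivariant (sdp M K0 V (V \<inter> K)) ({\<one>\<^bsub>M\<^esub>} \<times> rcosets\<^bsub>M\<lparr>carrier := V\<rparr>\<^esub> (V \<inter> K))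
                      (emb0 (V \<inter> K) ` (\<Union>\<chi>\<in>KK. Irr_under M K0 \<chi>)) \<Lambda>e"
    and Lea: "aut_equivariant (sdp M K0 V (V \<inter> K)) E (sdp_act \<alpha>)
                      (emb0 (V \<inter> K) ` (\<Union>\<chi>\<in>KK. Irr_under M K0 \<chi>)) \<Lambda>e"
begin

abbreviation "H \<equiv> V \<inter> K"
abbreviation "Z \<equiv> center M K"
abbreviation "GV \<equiv> M\<lparr>carrier := V\<rparr>"
abbreviation "SD \<equiv> sdp M K0 V (V \<inter> K)"

sublocale group M by (rule grp)

lemma cancel_l: "x \<in> carrier M \<Longrightarrow> y \<in> carrier M \<Longrightarrow> x \<otimes> (inv x \<otimes> y) = y"
  by (simp add: m_assoc[symmetric])
lemma cancel_l': "x \<in> carrier M \<Longrightarrow> y \<in> carrier M \<Longrightarrow> inv x \<otimes> (x \<otimes> y) = y"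
  by (simp add: m_assoc[symmetric])
lemmas gsimps = m_assoc cancel_l cancel_l' inv_mult_group

lemma comm_inv: assumes a: "a \<in> carrier M" and k: "k \<in> carrier M" and h: "a \<otimes> k = k \<otimes> a"
  shows "inv a \<otimes> k = k \<otimes> inv a"
proof -
  have "inv a \<otimes> k = inv a \<otimes> ((k \<otimes> a) \<otimes> inv a)" using a k by (simp add: m_assoc)
  also have "\<dots> = inv a \<otimes> ((a \<otimes> k) \<otimes> inv a)" using h by simp
  also have "\<dots> = k \<otimes> inv a" using a k by (simp add: m_assoc cancel_l')
  finally show ?thesis .
qed

lemma comm_conj: assumes m: "m \<in> carrier M" and z: "z \<in> carrier M" and k: "k \<in> carrier M"
  and h: "z \<otimes> (inv m \<otimes> k \<otimes> m) = (inv m \<otimes> k \<otimes> m) \<otimes> z"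
  shows "(m \<otimes> z \<otimes> inv m) \<otimes> k = k \<otimes> (m \<otimes> z \<otimes> inv m)"
proof -
  define k' where "k' = inv m \<otimes> k \<otimes> m"
  have k'c: "k' \<in> carrier M" using m k by (simp add: k'_def)
  have kk: "k = m \<otimes> k' \<otimes> inv m" using m k by (simp add: k'_def m_assoc cancel_l)
  have "(m \<otimes> z \<otimes> inv m) \<otimes> (m \<otimes> k' \<otimes> inv m) = m \<otimes> (z \<otimes> k') \<otimes> inv m"
    using m z k'c by (simp add: m_assoc cancel_l')
  also have "\<dots> = m \<otimes> (k' \<otimes> z) \<otimes> inv m" using h by (simp add: k'_def)
  also have "\<dots> = (m \<otimes> k' \<otimes> inv m) \<otimes> (m \<otimes> z \<otimes> inv m)"
    using m z k'c by (simp add: m_assoc cancel_l')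
  finally show ?thesis using kk by simp
qed

lemma Ksub: "subgroup K M" using Knorm by (simp add: normal_def)
lemma K0sub: "subgroup K0 M" using K0norm by (simp add: normal_def)
lemma KM: "K \<subseteq> carrier M" using Ksub by (simp add: subgroup.subset)
lemma K0M: "K0 \<subseteq> carrier M" using K0sub by (simp add: subgroup.subset)
lemma VM: "V \<subseteq> carrier M" using Vsub by (simp add: subgroup.subset)

lemma K_conj: "m \<in> carrier M \<Longrightarrow> k \<in> K \<Longrightarrow> m \<otimes> k \<otimes> inv m \<in> K"
  using Knorm by (simp add: normal.inv_op_closed2)
lemma K_conj': "m \<in> carrier M \<Longrightarrow> k \<in> K \<Longrightarrow> inv m \<otimes> k \<otimes> m \<in> K"
  using Knorm by (simp add: normal.inv_op_closed1)
lemma K0_conj: "m \<in> carrier M \<Longrightarrow> k \<in> K0 \<Longrightarrow> m \<otimes> k \<otimes> inv m \<in> K0"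
  using K0norm by (simp add: normal.inv_op_closed2)
lemma K0_conj': "m \<in> carrier M \<Longrightarrow> k \<in> K0 \<Longrightarrow> inv m \<otimes> k \<otimes> m \<in> K0"
  using K0norm by (simp add: normal.inv_op_closed1)

lemma K_mult: "a \<in> K \<Longrightarrow> b \<in> K \<Longrightarrow> a \<otimes> b \<in> K" using Ksub by (simp add: subgroup.m_closed)
lemma K_inv: "a \<in> K \<Longrightarrow> inv a \<in> K" using Ksub by (simp add: subgroup.m_inv_closed)
lemma K_one: "\<one> \<in> K" using Ksub by (simp add: subgroup.one_closed)
lemma K0_mult: "a \<in> K0 \<Longrightarrow> b \<in> K0 \<Longrightarrow> a \<otimes> b \<in> K0" using K0sub by (simp add: subgroup.m_closed)
lemma K0_inv: "a \<in> K0 \<Longrightarrow> inv a \<in> K0" using K0sub by (simp add: subgroup.m_inv_closed)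
lemma K0_one: "\<one> \<in> K0" using K0sub by (simp add: subgroup.one_closed)
lemma V_mult: "a \<in> V \<Longrightarrow> b \<in> V \<Longrightarrow> a \<otimes> b \<in> V" using Vsub by (simp add: subgroup.m_closed)
lemma V_inv: "a \<in> V \<Longrightarrow> inv a \<in> V" using Vsub by (simp add: subgroup.m_inv_closed)
lemma V_one: "\<one> \<in> V" using Vsub by (simp add: subgroup.one_closed)

lemma inK: "a \<in> K \<Longrightarrow> a \<in> carrier M" using KM by auto
lemma inK0: "a \<in> K0 \<Longrightarrow> a \<in> carrier M" using K0M by auto
lemma inV: "a \<in> V \<Longrightarrow> a \<in> carrier M" using VM by auto
lemma K0_K: "a \<in> K0 \<Longrightarrow> a \<in> K" using K0K by auto

lemma Z_K: "z \<in> Z \<Longrightarrow> z \<in> K" by (simp add: center_def)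
lemma Z_comm: "z \<in> Z \<Longrightarrow> k \<in> K \<Longrightarrow> z \<otimes> k = k \<otimes> z" by (simp add: center_def)
lemma inZ: "z \<in> Z \<Longrightarrow> z \<in> carrier M" using Z_K inK by blast

lemma Z_one: "\<one> \<in> Z" using K_one KM by (auto simp: center_def)
lemma Z_mult: assumes "a \<in> Z" "b \<in> Z" shows "a \<otimes> b \<in> Z"
proof -
  have ab: "a \<in> K" "b \<in> K" "a \<in> carrier M" "b \<in> carrier M" using assms Z_K inZ by auto
  have "(a \<otimes> b) \<otimes> k = k \<otimes> (a \<otimes> b)" if k: "k \<in> K" for k
  proof -
    have kc: "k \<in> carrier M" using k inK by auto
    have "(a \<otimes> b) \<otimes> k = a \<otimes> (k \<otimes> b)" using ab kc Z_comm[OF assms(2) k] by (simp add: m_assoc)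
    also have "\<dots> = (a \<otimes> k) \<otimes> b" using ab kc by (simp add: m_assoc)
    also have "\<dots> = k \<otimes> (a \<otimes> b)" using ab kc Z_comm[OF assms(1) k] by (simp add: m_assoc)
    finally show ?thesis .
  qed
  thus ?thesis using K_mult[OF ab(1,2)] by (simp add: center_def)
qed
lemma Z_inv: assumes "a \<in> Z" shows "inv a \<in> Z"
proof -
  have a: "a \<in> K" "a \<in> carrier M" using assms Z_K inZ by auto
  have "inv a \<otimes> k = k \<otimes> inv a" if k: "k \<in> K" for k
    using comm_inv[OF a(2) inK[OF k] Z_comm[OF assms k]] .
  thus ?thesis using K_inv[OF a(1)] by (simp add: center_def)
qed
lemma Z_conj: assumes m: "m \<in> carrier M" and z: "z \<in> Z" shows "m \<otimes> z \<otimes> inv m \<in> Z"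
proof -
  have zc: "z \<in> K" "z \<in> carrier M" using z Z_K inZ by auto
  have "(m \<otimes> z \<otimes> inv m) \<otimes> k = k \<otimes> (m \<otimes> z \<otimes> inv m)" if k: "k \<in> K" for k
    using comm_conj[OF m zc(2) inK[OF k] Z_comm[OF z K_conj'[OF m k]]] .
  thus ?thesis using K_conj[OF m zc(1)] by (simp add: center_def)
qed
lemma Z_conj': assumes m: "m \<in> carrier M" and z: "z \<in> Z" shows "inv m \<otimes> z \<otimes> m \<in> Z"
  using Z_conj[of "inv m" z] m z by simp

lemma H_Z: "h \<in> H \<Longrightarrow> h \<in> Z" using HZ by auto
lemma Hsub: "subgroup H M" using Vsub Ksub by (rule subgroups_Inter_pair)
lemma H_conjV: "v \<in> V \<Longrightarrow> h \<in> H \<Longrightarrow> v \<otimes> h \<otimes> inv v \<in> H"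
  using K_conj[of v h] V_mult V_inv inV by auto
lemma H_conjV': "v \<in> V \<Longrightarrow> h \<in> H \<Longrightarrow> inv v \<otimes> h \<otimes> v \<in> H"
  using K_conj'[of v h] V_mult V_inv inV by auto

lemma H_central: "h \<in> H \<Longrightarrow> k \<in> K \<Longrightarrow> h \<otimes> k \<otimes> inv h = k"
proof -
  assume h: "h \<in> H" and k: "k \<in> K"
  have hc: "h \<in> carrier M" "k \<in> carrier M" using h k inK by auto
  have "h \<otimes> k = k \<otimes> h" using Z_comm[OF H_Z[OF h] k] .
  thus ?thesis using hc by (simp add: m_assoc)
qed

lemma decompK: assumes "k \<in> K" obtains z k0 where "z \<in> Z" "k0 \<in> K0" "k = z \<otimes> k0"
  using assms ZK0 unfolding set_mult_def by blast

lemma decompM: assumes "m \<in> carrier M"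
  obtains z k0 v where "z \<in> Z" "k0 \<in> K0" "v \<in> V" "m = z \<otimes> k0 \<otimes> v"
proof -
  obtain k v where kv: "k \<in> K" "v \<in> V" "m = k \<otimes> v" using assms MKV unfolding set_mult_def by blast
  obtain z k0 where "z \<in> Z" "k0 \<in> K0" "k = z \<otimes> k0" using decompK[OF kv(1)] by blast
  thus ?thesis using that kv by blast
qed

lemma invGV: "x \<in> V \<Longrightarrow> inv\<^bsub>GV\<^esub> x = inv x" by (rule m_inv_consistent[OF Vsub])

lemma GV_group: "group GV" using Vsub by (rule subgroup.subgroup_is_group) (rule grp)

lemma H_normal_GV: "H \<lhd> GV"
proof -
  interpret GV: group GV by (rule GV_group)
  have sub: "subgroup H GV"
    using Hsub unfolding subgroup_def by (auto simp: invGV)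
  show ?thesis unfolding GV.normal_inv_iff
    using sub H_conjV by (auto simp: m_inv_consistent[OF Vsub])
qed

end


context setting begin

lemma K0_conjV: "v \<in> V \<Longrightarrow> k \<in> K0 \<Longrightarrow> v \<otimes> k \<otimes> inv v \<in> K0" using K0_conj inV by blast
lemma K0_conjV': "v \<in> V \<Longrightarrow> k \<in> K0 \<Longrightarrow> inv v \<otimes> k \<otimes> v \<in> K0" using K0_conj' inV by blast

lemma rGV: "H #>\<^bsub>GV\<^esub> v = H #> v" by (simp add: r_coset_def)
lemma rcosetsGV: "rcosets\<^bsub>GV\<^esub> H = {H #> v | v. v \<in> V}"
  by (auto simp: RCOSETS_def r_coset_def)

lemma cos_mem: "c \<in> H #> v \<longleftrightarrow> (\<exists>h\<in>H. c = h \<otimes> v)"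
  by (auto simp: r_coset_def)

lemma cos_eq_H: "v \<in> carrier M \<Longrightarrow> (H #> v = H) \<longleftrightarrow> v \<in> H"
  using coset_join1[of H v] coset_join2[of v H] Hsub by blast

lemma cos_mult_H: "h \<in> H \<Longrightarrow> v \<in> carrier M \<Longrightarrow> H #> (h \<otimes> v) = H #> v"
proof -
  assume h: "h \<in> H" and v: "v \<in> carrier M"
  have hc: "h \<in> carrier M" using h inV by auto
  have "H #> (h \<otimes> v) = (H #> h) #> v"
    using coset_mult_assoc[of H h v] hc v Hsub by (simp add: subgroup.subset)
  also have "H #> h = H" using cos_eq_H[OF hc] h by simp
  finally show ?thesis .
qed

lemma cos_eq_iff: assumes v: "v \<in> carrier M" and w: "w \<in> carrier M"
  shows "H #> v = H #> w \<longleftrightarrow> w \<otimes> inv v \<in> H"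
proof
  assume "H #> v = H #> w"
  hence "w \<in> H #> v" using rcos_self[OF w Hsub] by simp
  thus "w \<otimes> inv v \<in> H" using subgroup.rcos_module_imp[OF Hsub grp v] by blast
next
  assume h: "w \<otimes> inv v \<in> H"
  have "H #> w = H #> ((w \<otimes> inv v) \<otimes> v)" using v w by (simp add: m_assoc)
  also have "\<dots> = H #> v" using cos_mult_H[OF h v] .
  finally show "H #> v = H #> w" by simp
qed

lemma cos_sum: assumes v: "v \<in> V" and w: "w \<in> V"
  shows "(H #> v) <#> (H #> w) = H #> (v \<otimes> w)"
proof -
  interpret N: normal H GV by (rule H_normal_GV)
  have "(H #>\<^bsub>GV\<^esub> v) <#>\<^bsub>GV\<^esub> (H #>\<^bsub>GV\<^esub> w) = H #>\<^bsub>GV\<^esub> (v \<otimes>\<^bsub>GV\<^esub> w)"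
    using N.rcos_sum v w by simp
  thus ?thesis by (simp add: r_coset_def set_mult_def)
qed

lemma cos_some: assumes v: "v \<in> carrier M"
  shows "\<exists>h\<in>H. (SOME c. c \<in> H #> v) = h \<otimes> v"
proof -
  have "v \<in> H #> v" using rcos_self[OF v Hsub] .
  hence "(SOME c. c \<in> H #> v) \<in> H #> v" by (rule someI)
  thus ?thesis by (simp add: cos_mem)
qed

lemma sdp_carrier: "carrier SD = K0 \<times> {H #> v | v. v \<in> V}"
  by (simp add: sdp_def rcosetsGV)

lemma sdp_carrier_iff: "x \<in> carrier SD \<longleftrightarrow> (\<exists>k v. k \<in> K0 \<and> v \<in> V \<and> x = (k, H #> v))"
  by (auto simp: sdp_carrier)

lemma sdp_elem: "k \<in> K0 \<Longrightarrow> v \<in> V \<Longrightarrow> (k, H #> v) \<in> carrier SD"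
  by (auto simp: sdp_carrier)

lemma H_eq: "H #> \<one> = H" using cos_eq_H[of \<one>] Hsub subgroup.one_closed by auto

lemma sdp_one: "\<one>\<^bsub>SD\<^esub> = (\<one>, H #> \<one>)" by (simp add: sdp_def H_eq)

lemma sdp_mult: assumes k: "k \<in> K0" and k': "k' \<in> K0" and v: "v \<in> V" and v': "v' \<in> V"
  shows "(k, H #> v) \<otimes>\<^bsub>SD\<^esub> (k', H #> v') = (k \<otimes> (v \<otimes> k' \<otimes> inv v), H #> (v \<otimes> v'))"
proof -
  obtain h where h: "h \<in> H" and c: "(SOME c. c \<in> H #> v) = h \<otimes> v" using cos_some[OF inV[OF v]] by blast
  have hc: "h \<in> carrier M" using h inV by auto
  have vk: "v \<otimes> k' \<otimes> inv v \<in> K" using K0_K[OF K0_conj[OF inV[OF v] k']] .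
  have "(h \<otimes> v) \<otimes> k' \<otimes> inv (h \<otimes> v) = h \<otimes> (v \<otimes> k' \<otimes> inv v) \<otimes> inv h"
    using hc inV[OF v] inK0[OF k'] by (simp add: gsimps)
  also have "\<dots> = v \<otimes> k' \<otimes> inv v" using H_central[OF h vk] .
  finally have e: "(h \<otimes> v) \<otimes> k' \<otimes> inv (h \<otimes> v) = v \<otimes> k' \<otimes> inv v" .
  show ?thesis unfolding sdp_def using c e cos_sum[OF v v'] by (simp add: Let_def)
qed

lemma sdp_group: "group SD"
proof (rule groupI)
  fix x y assume x: "x \<in> carrier SD" and y: "y \<in> carrier SD"
  then obtain k v k' v' where "k \<in> K0" "v \<in> V" "x = (k, H #> v)" "k' \<in> K0" "v' \<in> V" "y = (k', H #> v')"
    by (auto simp: sdp_carrier_iff)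
  thus "x \<otimes>\<^bsub>SD\<^esub> y \<in> carrier SD"
    by (simp add: sdp_mult K0_mult K0_conj inV V_mult sdp_elem)
next
  show "\<one>\<^bsub>SD\<^esub> \<in> carrier SD" by (simp add: sdp_one sdp_elem K0_one V_one)
next
  fix x y z assume x: "x \<in> carrier SD" and y: "y \<in> carrier SD" and z: "z \<in> carrier SD"
  then obtain k1 v1 k2 v2 k3 v3 where
    a: "k1 \<in> K0" "v1 \<in> V" "x = (k1, H #> v1)" "k2 \<in> K0" "v2 \<in> V" "y = (k2, H #> v2)"
      "k3 \<in> K0" "v3 \<in> V" "z = (k3, H #> v3)"
    by (auto simp: sdp_carrier_iff)
  have c: "k1 \<in> carrier M" "k2 \<in> carrier M" "k3 \<in> carrier M" "v1 \<in> carrier M" "v2 \<in> carrier M" "v3 \<in> carrier M"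
    using a inK0 inV by auto
  have m1: "k1 \<otimes> (v1 \<otimes> k2 \<otimes> inv v1) \<in> K0" "v1 \<otimes> v2 \<in> V"
    using a by (simp_all add: K0_mult K0_conj inV V_mult)
  have m2: "k2 \<otimes> (v2 \<otimes> k3 \<otimes> inv v2) \<in> K0" "v2 \<otimes> v3 \<in> V"
    using a by (simp_all add: K0_mult K0_conj inV V_mult)
  have l: "x \<otimes>\<^bsub>SD\<^esub> y \<otimes>\<^bsub>SD\<^esub> z = (k1 \<otimes> (v1 \<otimes> k2 \<otimes> inv v1) \<otimes> ((v1 \<otimes> v2) \<otimes> k3 \<otimes> inv (v1 \<otimes> v2)),
       H #> (v1 \<otimes> v2 \<otimes> v3))"
    by (simp only: a(3,6,9) sdp_mult[OF a(1) a(4) a(2) a(5)] sdp_mult[OF m1(1) a(7) m1(2) a(8)])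
  have r: "x \<otimes>\<^bsub>SD\<^esub> (y \<otimes>\<^bsub>SD\<^esub> z) = (k1 \<otimes> (v1 \<otimes> (k2 \<otimes> (v2 \<otimes> k3 \<otimes> inv v2)) \<otimes> inv v1),
       H #> (v1 \<otimes> (v2 \<otimes> v3)))"
    by (simp only: a(3,6,9) sdp_mult[OF a(4) a(7) a(5) a(8)] sdp_mult[OF a(1) m2(1) a(2) m2(2)])
  show "x \<otimes>\<^bsub>SD\<^esub> y \<otimes>\<^bsub>SD\<^esub> z = x \<otimes>\<^bsub>SD\<^esub> (y \<otimes>\<^bsub>SD\<^esub> z)"
    unfolding l r using c by (simp add: gsimps)
next
  fix x assume x: "x \<in> carrier SD"
  then obtain k v where a: "k \<in> K0" "v \<in> V" "x = (k, H #> v)" by (auto simp: sdp_carrier_iff)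
  have c: "k \<in> carrier M" "v \<in> carrier M" using a inK0 inV by auto
  show "\<one>\<^bsub>SD\<^esub> \<otimes>\<^bsub>SD\<^esub> x = x"
    using a c by (simp add: sdp_one sdp_mult K0_one V_one)
  have y: "(inv v \<otimes> inv k \<otimes> v, H #> inv v) \<in> carrier SD"
    using a by (simp add: sdp_elem K0_conjV' K0_inv V_inv)
  have m: "inv v \<otimes> inv k \<otimes> v \<in> K0" "inv v \<in> V" using a by (simp_all add: K0_conjV' K0_inv V_inv)
  have "(inv v \<otimes> inv k \<otimes> v, H #> inv v) \<otimes>\<^bsub>SD\<^esub> x
     = (inv v \<otimes> inv k \<otimes> v \<otimes> (inv v \<otimes> k \<otimes> inv (inv v)), H #> (inv v \<otimes> v))"
    by (simp only: a(3) sdp_mult[OF m(1) a(1) m(2) a(2)])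
  also have "\<dots> = \<one>\<^bsub>SD\<^esub>" using c by (simp add: sdp_one gsimps)
  finally have "(inv v \<otimes> inv k \<otimes> v, H #> inv v) \<otimes>\<^bsub>SD\<^esub> x = \<one>\<^bsub>SD\<^esub>" .
  thus "\<exists>y\<in>carrier SD. y \<otimes>\<^bsub>SD\<^esub> x = \<one>\<^bsub>SD\<^esub>" using y by blast
qed

lemma sdp_inv: assumes k: "k \<in> K0" and v: "v \<in> V"
  shows "inv\<^bsub>SD\<^esub> (k, H #> v) = (inv v \<otimes> inv k \<otimes> v, H #> inv v)"
proof -
  interpret S: group SD by (rule sdp_group)
  have c: "k \<in> carrier M" "v \<in> carrier M" using k v inK0 inV by auto
  show ?thesis
  proof (rule S.inv_equality)
    have m: "inv v \<otimes> inv k \<otimes> v \<in> K0" "inv v \<in> V" using k v by (simp_all add: K0_conjV' K0_inv V_inv)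
    have "(inv v \<otimes> inv k \<otimes> v, H #> inv v) \<otimes>\<^bsub>SD\<^esub> (k, H #> v)
       = (inv v \<otimes> inv k \<otimes> v \<otimes> (inv v \<otimes> k \<otimes> inv (inv v)), H #> (inv v \<otimes> v))"
      by (simp only: sdp_mult[OF m(1) k m(2) v])
    also have "\<dots> = \<one>\<^bsub>SD\<^esub>" using c by (simp add: sdp_one gsimps)
    finally show "(inv v \<otimes> inv k \<otimes> v, H #> inv v) \<otimes>\<^bsub>SD\<^esub> (k, H #> v) = \<one>\<^bsub>SD\<^esub>" .
  qed (use k v in \<open>simp_all add: sdp_elem K0_conjV' K0_inv V_inv\<close>)
qed

lemma sdp_conj: assumes k0: "k0 \<in> K0" and v: "v \<in> V" and k: "k \<in> K0" and w: "w \<in> V"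
  shows "inv\<^bsub>SD\<^esub> (k0, H #> v) \<otimes>\<^bsub>SD\<^esub> (k, H #> w) \<otimes>\<^bsub>SD\<^esub> (k0, H #> v)
     = (inv v \<otimes> (inv k0 \<otimes> k \<otimes> (w \<otimes> k0 \<otimes> inv w)) \<otimes> v, H #> (inv v \<otimes> w \<otimes> v))"
proof -
  have c: "k0 \<in> carrier M" "v \<in> carrier M" "k \<in> carrier M" "w \<in> carrier M"
    using k0 v k w inK0 inV by auto
  have m: "inv v \<otimes> inv k0 \<otimes> v \<in> K0" "inv v \<in> V" using k0 v by (simp_all add: K0_conjV' K0_inv V_inv)
  have m2: "inv v \<otimes> inv k0 \<otimes> v \<otimes> (inv v \<otimes> k \<otimes> inv (inv v)) \<in> K0" "inv v \<otimes> w \<in> V"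
    using k0 v k w m K0_mult[OF m(1) K0_conjV[OF m(2) k]] by (simp_all add: V_mult V_inv)
  have "inv\<^bsub>SD\<^esub> (k0, H #> v) \<otimes>\<^bsub>SD\<^esub> (k, H #> w) \<otimes>\<^bsub>SD\<^esub> (k0, H #> v)
     = (inv v \<otimes> inv k0 \<otimes> v \<otimes> (inv v \<otimes> k \<otimes> inv (inv v)) \<otimes> ((inv v \<otimes> w) \<otimes> k0 \<otimes> inv (inv v \<otimes> w)),
        H #> (inv v \<otimes> w \<otimes> v))"
    by (simp only: sdp_inv[OF k0 v] sdp_mult[OF m(1) k m(2) w] sdp_mult[OF m2(1) k0 m2(2) v])
  also have "\<dots> = (inv v \<otimes> (inv k0 \<otimes> k \<otimes> (w \<otimes> k0 \<otimes> inv w)) \<otimes> v, H #> (inv v \<otimes> w \<otimes> v))"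
    using c by (simp add: gsimps)
  finally show ?thesis .
qed

end


lemma sum_cnj_nonzero:
  assumes fin: "finite S" and a: "a \<in> S" and fa: "f a \<noteq> 0"
  shows "(\<Sum>x\<in>S. f x * cnj (f x)) \<noteq> (0::complex)"
proof -
  have "(\<Sum>x\<in>S. f x * cnj (f x)) = of_real (\<Sum>x\<in>S. (cmod (f x))\<^sup>2)"
    by (simp only: of_real_sum complex_norm_square)
  moreover have "(\<Sum>x\<in>S. (cmod (f x))\<^sup>2) \<ge> (cmod (f a))\<^sup>2"
    using fin a by (intro member_le_sum) auto
  moreover have "(cmod (f a))\<^sup>2 > 0" using fa by simp
  ultimately show ?thesis by (metis less_le_trans of_real_eq_0_iff order_less_irrefl)
qed

lemma subspace1:
  assumes W: "is_subspace 1 W" and ne: "W \<noteq> {0\<^sub>v 1}"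
  shows "W = carrier_vec 1"
proof -
  obtain w where w: "w \<in> W" "w \<noteq> 0\<^sub>v 1" using W ne unfolding is_subspace_def by blast
  have wc: "w \<in> carrier_vec 1" using W w unfolding is_subspace_def by auto
  have w0: "w $ 0 \<noteq> 0"
  proof
    assume "w $ 0 = 0"
    hence "w = 0\<^sub>v 1" using wc by (intro eq_vecI) (auto simp: less_Suc_eq)
    thus False using w by simp
  qed
  show ?thesis
  proof
    show "W \<subseteq> carrier_vec 1" using W unfolding is_subspace_def by auto
    show "carrier_vec 1 \<subseteq> W"
    proof
      fix x :: "complex vec" assume x: "x \<in> carrier_vec 1"
      have "x = (x $ 0 / w $ 0) \<cdot>\<^sub>v w" using x wc w0 by (intro eq_vecI) (auto simp: less_Suc_eq)
      thus "x \<in> W" using W w unfolding is_subspace_def by metis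
    qed
  qed
qed

lemma scal_mult_l: "B \<in> carrier_mat n m \<Longrightarrow> (a \<cdot>\<^sub>m 1\<^sub>m n) * B = a \<cdot>\<^sub>m (B :: complex mat)"
  by (simp add: mult_smult_assoc_mat[of "1\<^sub>m n" n n B m])
lemma scal_mult_r: "A \<in> carrier_mat m n \<Longrightarrow> A * (a \<cdot>\<^sub>m 1\<^sub>m n) = a \<cdot>\<^sub>m (A :: complex mat)"
  by (simp add: mult_smult_distrib[of A m n "1\<^sub>m n" n])
lemma scal_scal: "(a \<cdot>\<^sub>m 1\<^sub>m n) * (b \<cdot>\<^sub>m 1\<^sub>m n) = ((a * b) \<cdot>\<^sub>m 1\<^sub>m n :: complex mat)"
proof -
  have "(a \<cdot>\<^sub>m 1\<^sub>m n) * (b \<cdot>\<^sub>m 1\<^sub>m n) = a \<cdot>\<^sub>m (b \<cdot>\<^sub>m 1\<^sub>m n :: complex mat)"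
    by (rule scal_mult_l[of _ n n]) simp
  thus ?thesis by (intro eq_matI) (auto simp: mult.assoc)
qed
lemma smult_mat_vec: "A \<in> carrier_mat n m \<Longrightarrow> w \<in> carrier_vec m \<Longrightarrow> (a \<cdot>\<^sub>m A) *\<^sub>v w = a \<cdot>\<^sub>v (A *\<^sub>v (w :: complex vec))"
  by (intro eq_vecI) (auto simp: scalar_prod_def sum_distrib_left mult.assoc)

context setting begin

definition lam :: "('g \<Rightarrow> complex) \<Rightarrow> 'g \<Rightarrow> complex" where
  "lam \<chi> z = \<chi> z / \<chi> \<one>"
definition nu :: "('g \<Rightarrow> complex) \<Rightarrow> 'g \<Rightarrow> complex" where
  "nu \<chi> = (\<lambda>x. if x \<in> H then lam \<chi> x else 0)"
definition th :: "('g \<Rightarrow> complex) \<Rightarrow> 'g \<Rightarrow> complex" where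
  "th \<chi> = restr \<chi> K0"

abbreviation "GK \<equiv> M\<lparr>carrier := K\<rparr>"
abbreviation "GK0 \<equiv> M\<lparr>carrier := K0\<rparr>"
abbreviation "GH \<equiv> M\<lparr>carrier := H\<rparr>"

lemma GK_group: "group GK" using Ksub by (rule subgroup.subgroup_is_group) (rule grp)
lemma GK0_group: "group GK0" using K0sub by (rule subgroup.subgroup_is_group) (rule grp)
lemma invGK: "x \<in> K \<Longrightarrow> inv\<^bsub>GK\<^esub> x = inv x" by (rule m_inv_consistent[OF Ksub])
lemma invGK0: "x \<in> K0 \<Longrightarrow> inv\<^bsub>GK0\<^esub> x = inv x" by (rule m_inv_consistent[OF K0sub])

end

locale chi_loc = setting +
  fixes \<chi> and n :: nat and \<rho>
  assumes chiKK: "\<chi> \<in> KK"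
    and rirr: "irreducible_rep (M\<lparr>carrier := K\<rparr>) n \<rho>"
    and chi_eq: "\<chi> = (\<lambda>g. if g \<in> K then mat_trace (\<rho> g) else 0)"
begin

lemma rrep: "is_rep GK n \<rho>" using rirr by (simp add: irreducible_rep_def)
lemma npos: "0 < n" using rrep by (simp add: is_rep_def)
lemma rho_carrier: "k \<in> K \<Longrightarrow> \<rho> k \<in> carrier_mat n n" using rep_carrier[OF rrep] by simp
lemma rho_mult: "k \<in> K \<Longrightarrow> k' \<in> K \<Longrightarrow> \<rho> (k \<otimes> k') = \<rho> k * \<rho> k'" using rep_mult[OF rrep] by simp
lemma rho_one: "\<rho> \<one> = 1\<^sub>m n" using rep_one[OF rrep] by simp

lemma chi_val: "k \<in> K \<Longrightarrow> \<chi> k = mat_trace (\<rho> k)" by (simp add: chi_eq)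
lemma chi_out: "x \<notin> K \<Longrightarrow> \<chi> x = 0" by (simp add: chi_eq)
lemma chi_outM: "x \<notin> carrier M \<Longrightarrow> \<chi> x = 0" using chi_out KM by auto
lemma chi_one: "\<chi> \<one> = of_nat n" using K_one by (simp add: chi_val rho_one mat_trace_one)
lemma chi_one_nz: "\<chi> \<one> \<noteq> 0" using chi_one npos by simp

lemma rho_Z: assumes z: "z \<in> Z" shows "\<rho> z = lam \<chi> z \<cdot>\<^sub>m 1\<^sub>m n"
proof -
  have zK: "z \<in> K" using Z_K[OF z] .
  have "\<exists>a. \<rho> z = a \<cdot>\<^sub>m 1\<^sub>m n"
  proof (rule schur[OF rirr rho_carrier[OF zK]])
    fix g assume "g \<in> carrier GK"
    hence g: "g \<in> K" by simp
    show "\<rho> z * \<rho> g = \<rho> g * \<rho> z" using rho_mult[OF zK g] rho_mult[OF g zK] Z_comm[OF z g] by simp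
  qed
  then obtain a where a: "\<rho> z = a \<cdot>\<^sub>m 1\<^sub>m n" by blast
  have "\<chi> z = a * of_nat n" using chi_val[OF zK] a by (simp add: mat_trace_smult[of "1\<^sub>m n" n] mat_trace_one)
  hence "a = lam \<chi> z" using chi_one npos by (simp add: lam_def)
  thus ?thesis using a by simp
qed

lemma lam_mult: assumes a: "a \<in> Z" and b: "b \<in> Z" shows "lam \<chi> (a \<otimes> b) = lam \<chi> a * lam \<chi> b"
proof -
  have "lam \<chi> (a \<otimes> b) \<cdot>\<^sub>m 1\<^sub>m n = (lam \<chi> a \<cdot>\<^sub>m 1\<^sub>m n) * (lam \<chi> b \<cdot>\<^sub>m 1\<^sub>m n)"
    using rho_Z[OF Z_mult[OF a b]] rho_Z[OF a] rho_Z[OF b] rho_mult[OF Z_K[OF a] Z_K[OF b]] by simp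
  also have "\<dots> = (lam \<chi> a * lam \<chi> b) \<cdot>\<^sub>m 1\<^sub>m n" by (rule scal_scal)
  finally have "(lam \<chi> (a \<otimes> b) \<cdot>\<^sub>m 1\<^sub>m n) $$ (0,0) = ((lam \<chi> a * lam \<chi> b) \<cdot>\<^sub>m 1\<^sub>m n) $$ (0,0)" by simp
  thus ?thesis using npos by simp
qed

lemma lam_one: "lam \<chi> \<one> = 1" using chi_one_nz by (simp add: lam_def)

lemma lam_inv: assumes a: "a \<in> Z" shows "lam \<chi> (inv a) * lam \<chi> a = 1"
  using lam_mult[OF Z_inv[OF a] a] inZ[OF a] lam_one by simp

lemma chi_Zk: assumes z: "z \<in> Z" and k: "k \<in> K" shows "\<chi> (z \<otimes> k) = lam \<chi> z * \<chi> k"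
proof -
  have "\<rho> (z \<otimes> k) = lam \<chi> z \<cdot>\<^sub>m \<rho> k"
    using rho_mult[OF Z_K[OF z] k] rho_Z[OF z] rho_carrier[OF k] by (simp add: scal_mult_l)
  thus ?thesis using chi_val[OF k] chi_val[OF K_mult[OF Z_K[OF z] k]] rho_carrier[OF k]
    by (simp add: mat_trace_smult[of _ n])
qed

lemma chi_Z: assumes z: "z \<in> Z" shows "\<chi> z = lam \<chi> z * of_nat n"
  using chi_Zk[OF z K_one] inZ[OF z] chi_one by simp

lemma chi_classK: assumes k: "k \<in> K" and x: "x \<in> K" shows "\<chi> (k \<otimes> x \<otimes> inv k) = \<chi> x"
proof -
  have "mat_trace (\<rho> (k \<otimes>\<^bsub>GK\<^esub> x \<otimes>\<^bsub>GK\<^esub> inv\<^bsub>GK\<^esub> k)) = mat_trace (\<rho> x)"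
    using rep_trace_conj[OF GK_group rrep] k x by simp
  thus ?thesis using k x by (simp add: invGK chi_val K_mult K_inv)
qed

lemma conjc_K: assumes k: "k \<in> K" shows "conjc M k \<chi> = \<chi>"
proof
  fix x
  show "conjc M k \<chi> x = \<chi> x"
  proof (cases "x \<in> K")
    case True
    thus ?thesis using chi_classK[OF K_inv[OF k] True] k inK[OF True] inK[OF k]
      by (simp add: conjc_def)
  next
    case False
    show ?thesis
    proof (cases "x \<in> carrier M")
      case xc: True
      have "inv k \<otimes> x \<otimes> k \<notin> K"
      proof
        assume a: "inv k \<otimes> x \<otimes> k \<in> K"
        have "k \<otimes> (inv k \<otimes> x \<otimes> k) \<otimes> inv k \<in> K" using K_conj[OF inK[OF k] a] .
        moreover have "k \<otimes> (inv k \<otimes> x \<otimes> k) \<otimes> inv k = x"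
          using inK[OF k] xc by (simp add: gsimps)
        ultimately show False using False by simp
      qed
      thus ?thesis using False by (simp add: conjc_def chi_out)
    qed (simp add: conjc_def chi_out False)
  qed
qed

lemma th_eq: "th \<chi> = (\<lambda>g. if g \<in> K0 then mat_trace (\<rho> g) else 0)"
  by (auto simp: th_def restr_def chi_val K0_K intro!: ext)

lemma rho_K0_irr: "irreducible_rep GK0 n \<rho>"
  unfolding irreducible_rep_def
proof (intro conjI allI impI)
  show rep0: "is_rep GK0 n \<rho>"
    using rrep K0K unfolding is_rep_def by auto
  fix W assume W: "is_subspace n W \<and> (\<forall>g\<in>carrier GK0. \<forall>w\<in>W. \<rho> g *\<^sub>v w \<in> W)"
  have "\<forall>g\<in>carrier GK. \<forall>w\<in>W. \<rho> g *\<^sub>v w \<in> W"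
  proof (intro ballI)
    fix g w assume g: "g \<in> carrier GK" and w: "w \<in> W"
    obtain z k0 where zk: "z \<in> Z" "k0 \<in> K0" "g = z \<otimes> k0" using decompK[of g] g by auto
    have wc: "w \<in> carrier_vec n" using W w unfolding is_subspace_def by auto
    have "\<rho> g = lam \<chi> z \<cdot>\<^sub>m \<rho> k0"
      using zk rho_mult[OF Z_K[OF zk(1)] K0_K[OF zk(2)]] rho_Z[OF zk(1)] rho_carrier[OF K0_K[OF zk(2)]]
      by (simp add: scal_mult_l)
    hence "\<rho> g *\<^sub>v w = lam \<chi> z \<cdot>\<^sub>v (\<rho> k0 *\<^sub>v w)"
      using rho_carrier[OF K0_K[OF zk(2)]] wc by (simp add: smult_mat_vec)
    moreover have "\<rho> k0 *\<^sub>v w \<in> W" using W zk(2) w by auto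
    ultimately show "\<rho> g *\<^sub>v w \<in> W" using W unfolding is_subspace_def by auto
  qed
  thus "W = {0\<^sub>v n} \<or> W = carrier_vec n" using irr_dichotomy[OF rirr] W by blast
qed

lemma th_Irr: "th \<chi> \<in> Irr GK0"
  unfolding Irr_def using rho_K0_irr th_eq by auto

lemma th_under: "th \<chi> \<in> Irr_under M K0 \<chi>"
proof -
  have finK0: "finite K0" using fin K0M finite_subset by auto
  have "(\<Sum>h\<in>K0. restr \<chi> K0 h * cnj (th \<chi> h)) = (\<Sum>h\<in>K0. th \<chi> h * cnj (th \<chi> h))"
    by (simp add: th_def)
  moreover have "(\<Sum>h\<in>K0. th \<chi> h * cnj (th \<chi> h)) \<noteq> 0"
    using sum_cnj_nonzero[OF finK0 K0_one, of "th \<chi>"] chi_one_nz K0_one by (simp add: th_def restr_def)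
  moreover have "card K0 \<noteq> 0" using finK0 K0_one by auto
  ultimately show ?thesis using th_Irr by (simp add: Irr_under_def)
qed

end


context setting begin

lemma emb0_vanish:
  assumes f: "\<And>k. k \<notin> K0 \<Longrightarrow> f k = 0" and x: "x \<notin> carrier SD"
  shows "emb0 H f x = 0"
proof -
  obtain k C where xk: "x = (k, C)" by (cases x)
  show ?thesis
  proof (cases "C = H")
    case True
    have "k \<notin> K0" using x xk True sdp_elem[of k \<one>] V_one H_eq by auto
    thus ?thesis using xk True f by (simp add: emb0_def)
  qed (simp add: emb0_def xk)
qed

lemma conjc_GV: "v \<in> V \<Longrightarrow> conjc GV v f = (\<lambda>x. if x \<in> V then f (inv v \<otimes> x \<otimes> v) else 0)"
  by (simp add: conjc_def invGV cong: if_cong)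

end

context chi_loc begin

lemma lamH_mult: "h \<in> H \<Longrightarrow> h' \<in> H \<Longrightarrow> lam \<chi> (h \<otimes> h') = lam \<chi> h * lam \<chi> h'"
  using lam_mult H_Z by blast

lemma nu_Irr: "nu \<chi> \<in> Irr GH"
proof -
  define r where "r = (\<lambda>x. lam \<chi> x \<cdot>\<^sub>m (1\<^sub>m 1 :: complex mat))"
  have rep: "is_rep GH 1 r"
    unfolding is_rep_def r_def
    using lamH_mult lam_one by (auto simp: scal_scal)
  have irr: "irreducible_rep GH 1 r"
    unfolding irreducible_rep_def using rep subspace1 by blast
  have "nu \<chi> = (\<lambda>g. if g \<in> carrier GH then mat_trace (r g) else 0)"
    by (auto simp: nu_def r_def mat_trace_smult[of _ 1] mat_trace_one intro!: ext)
  thus ?thesis using irr unfolding Irr_def by blast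
qed

lemma nu_under: "nu \<chi> \<in> Irr_under M H \<chi>"
proof -
  have finH: "finite H" using fin VM finite_subset by auto
  have oneH: "\<one> \<in> H" using V_one K_one by simp
  have "(\<Sum>h\<in>H. restr \<chi> H h * cnj (nu \<chi> h)) = (\<Sum>h\<in>H. of_nat n * (lam \<chi> h * cnj (lam \<chi> h)))"
    by (intro sum.cong refl) (simp add: restr_def nu_def chi_Z[OF H_Z])
  also have "\<dots> = of_nat n * (\<Sum>h\<in>H. lam \<chi> h * cnj (lam \<chi> h))" by (simp add: sum_distrib_left)
  finally have e: "(\<Sum>h\<in>H. restr \<chi> H h * cnj (nu \<chi> h)) = of_nat n * (\<Sum>h\<in>H. lam \<chi> h * cnj (lam \<chi> h))" .
  have "(\<Sum>h\<in>H. lam \<chi> h * cnj (lam \<chi> h)) \<noteq> 0"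
    using sum_cnj_nonzero[OF finH oneH, of "lam \<chi>"] lam_one by simp
  hence "(\<Sum>h\<in>H. restr \<chi> H h * cnj (nu \<chi> h)) \<noteq> 0" using e npos by simp
  moreover have "card H \<noteq> 0" using finH oneH by auto
  ultimately show ?thesis using nu_Irr by (simp add: Irr_under_def)
qed

lemma nuU: "nu \<chi> \<in> (\<Union>\<chi>\<in>KK. Irr_under M H \<chi>)" using nu_under chiKK by blast
lemma thU: "emb0 H (th \<chi>) \<in> emb0 H ` (\<Union>\<chi>\<in>KK. Irr_under M K0 \<chi>)" using th_under chiKK by blast

lemma nu'_ext: "\<Lambda>0 (nu \<chi>) \<in> Irr (GV\<lparr>carrier := stab GV (nu \<chi>)\<rparr>) \<and> restr (\<Lambda>0 (nu \<chi>)) H = nu \<chi>"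
  using L0 nuU unfolding ext_map_def by blast

lemma th'_ext: "\<Lambda>e (emb0 H (th \<chi>)) \<in> Irr (SD\<lparr>carrier := stab SD (emb0 H (th \<chi>))\<rparr>)
     \<and> restr (\<Lambda>e (emb0 H (th \<chi>))) (K0 \<times> {H}) = emb0 H (th \<chi>)"
  using Le thU unfolding ext_map_def by blast

definition "Vchi = {v \<in> V. conjc M v \<chi> = \<chi>}"

lemma chi_vanM: "\<And>x. x \<notin> carrier M \<Longrightarrow> \<chi> x = 0" using chi_outM .

lemma stabM_sub: "subgroup (stab M \<chi>) M" by (rule stab_subgroup[OF grp chi_vanM])

lemma K_stab: "k \<in> K \<Longrightarrow> k \<in> stab M \<chi>" using conjc_K inK by (simp add: stab_def)

lemma stab_dec: assumes z: "z \<in> Z" and k0: "k0 \<in> K0" and v: "v \<in> V"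
  shows "z \<otimes> k0 \<otimes> v \<in> stab M \<chi> \<longleftrightarrow> v \<in> Vchi"
proof -
  define k where "k = z \<otimes> k0"
  have k: "k \<in> K" using K_mult[OF Z_K[OF z] K0_K[OF k0]] by (simp add: k_def)
  have kc: "k \<in> carrier M" "v \<in> carrier M" using inK[OF k] inV[OF v] by auto
  have e: "conjc M (k \<otimes> v) \<chi> = conjc M k (conjc M v \<chi>)" using conjc_comp[OF grp kc, symmetric] .
  show ?thesis
  proof
    assume "z \<otimes> k0 \<otimes> v \<in> stab M \<chi>"
    hence "conjc M (k \<otimes> v) \<chi> = \<chi>" by (simp add: stab_def k_def)
    hence "conjc M (inv k) (conjc M k (conjc M v \<chi>)) = conjc M (inv k) \<chi>" using e by simp
    also have "conjc M (inv k) \<chi> = \<chi>" using conjc_K[OF K_inv[OF k]] .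
    also have "conjc M (inv k) (conjc M k (conjc M v \<chi>)) = conjc M \<one> (conjc M v \<chi>)"
      using kc by (simp add: conjc_comp[OF grp] gsimps)
    also have "\<dots> = conjc M v \<chi>" by (rule conjc_one[OF grp]) (simp add: conjc_def)
    finally show "v \<in> Vchi" using v by (simp add: Vchi_def)
  next
    assume "v \<in> Vchi"
    hence "conjc M v \<chi> = \<chi>" by (simp add: Vchi_def)
    hence "conjc M (k \<otimes> v) \<chi> = \<chi>" using e conjc_K[OF k] by simp
    thus "z \<otimes> k0 \<otimes> v \<in> stab M \<chi>" using kc by (simp add: stab_def k_def)
  qed
qed

lemma Vchi_V: "v \<in> Vchi \<Longrightarrow> v \<in> V" by (simp add: Vchi_def)
lemma Vchi_sub: "subgroup Vchi M"
proof -
  have "Vchi = V \<inter> stab M \<chi>" by (auto simp: Vchi_def stab_def inV)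
  thus ?thesis using subgroups_Inter_pair[OF Vsub stabM_sub] by simp
qed
lemma Vchi_mult: "a \<in> Vchi \<Longrightarrow> b \<in> Vchi \<Longrightarrow> a \<otimes> b \<in> Vchi" using Vchi_sub by (simp add: subgroup.m_closed)
lemma Vchi_inv: "a \<in> Vchi \<Longrightarrow> inv a \<in> Vchi" using Vchi_sub by (simp add: subgroup.m_inv_closed)
lemma Vchi_one: "\<one> \<in> Vchi" using Vchi_sub by (simp add: subgroup.one_closed)

lemma Vchi_conj: "v \<in> Vchi \<Longrightarrow> x \<in> carrier M \<Longrightarrow> \<chi> (inv v \<otimes> x \<otimes> v) = \<chi> x"
proof -
  assume v: "v \<in> Vchi" and x: "x \<in> carrier M"
  have "conjc M v \<chi> x = \<chi> x" using v by (simp add: Vchi_def)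
  thus ?thesis using x by (simp add: conjc_def)
qed

lemma Vchi_conj': "v \<in> Vchi \<Longrightarrow> x \<in> carrier M \<Longrightarrow> \<chi> (v \<otimes> x \<otimes> inv v) = \<chi> x"
  using Vchi_conj[OF Vchi_inv, of v x] Vchi_V inV by simp

lemma lam_Vchi: "v \<in> Vchi \<Longrightarrow> z \<in> Z \<Longrightarrow> lam \<chi> (v \<otimes> z \<otimes> inv v) = lam \<chi> z"
  using Vchi_conj'[of v z] inZ by (simp add: lam_def)

lemma Vchi_stabV: assumes v: "v \<in> Vchi" shows "v \<in> stab GV (nu \<chi>)"
proof -
  have vV: "v \<in> V" using Vchi_V[OF v] .
  have "conjc GV v (nu \<chi>) = nu \<chi>"
  proof
    fix x
    show "conjc GV v (nu \<chi>) x = nu \<chi> x"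
    proof (cases "x \<in> V")
      case True
      have xc: "x \<in> carrier M" using inV[OF True] .
      have iff: "inv v \<otimes> x \<otimes> v \<in> H \<longleftrightarrow> x \<in> H"
      proof
        assume "inv v \<otimes> x \<otimes> v \<in> H"
        hence "v \<otimes> (inv v \<otimes> x \<otimes> v) \<otimes> inv v \<in> H" using H_conjV[OF vV] by blast
        thus "x \<in> H" using xc inV[OF vV] by (simp add: gsimps)
      qed (use H_conjV'[OF vV] in blast)
      show ?thesis using True iff Vchi_conj[OF v xc] vV by (simp add: conjc_GV nu_def lam_def)
    next
      case False
      thus ?thesis by (simp add: conjc_GV vV nu_def)
    qed
  qed
  thus ?thesis using vV by (simp add: stab_def)
qed

lemma th_vanish: "k \<notin> K0 \<Longrightarrow> th \<chi> k = 0" by (simp add: th_def restr_def)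

lemma Vchi_stabS: assumes k0: "k0 \<in> K0" and v: "v \<in> Vchi"
  shows "(k0, H #> v) \<in> stab SD (emb0 H (th \<chi>))"
proof -
  have vV: "v \<in> V" using Vchi_V[OF v] .
  have sc: "(k0, H #> v) \<in> carrier SD" using sdp_elem[OF k0 vV] .
  have "conjc SD (k0, H #> v) (emb0 H (th \<chi>)) = emb0 H (th \<chi>)"
  proof
    fix x
    show "conjc SD (k0, H #> v) (emb0 H (th \<chi>)) x = emb0 H (th \<chi>) x"
    proof (cases "x \<in> carrier SD")
      case False
      thus ?thesis using emb0_vanish[OF th_vanish False] by (simp add: conjc_def)
    next
      case True
      then obtain k w where kw: "k \<in> K0" "w \<in> V" "x = (k, H #> w)" by (auto simp: sdp_carrier_iff)
      have c: "k \<in> carrier M" "w \<in> carrier M" "v \<in> carrier M" "k0 \<in> carrier M"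
        using kw vV k0 inK0 inV by auto
      have cj: "inv\<^bsub>SD\<^esub> (k0, H #> v) \<otimes>\<^bsub>SD\<^esub> x \<otimes>\<^bsub>SD\<^esub> (k0, H #> v)
          = (inv v \<otimes> (inv k0 \<otimes> k \<otimes> (w \<otimes> k0 \<otimes> inv w)) \<otimes> v, H #> (inv v \<otimes> w \<otimes> v))"
        using sdp_conj[OF k0 vV kw(1) kw(2)] kw by simp
      have iff: "inv v \<otimes> w \<otimes> v \<in> H \<longleftrightarrow> w \<in> H"
      proof
        assume "inv v \<otimes> w \<otimes> v \<in> H"
        hence "v \<otimes> (inv v \<otimes> w \<otimes> v) \<otimes> inv v \<in> H" using H_conjV[OF vV] by blast
        thus "w \<in> H" using c by (simp add: gsimps)
      qed (use H_conjV'[OF vV] in blast)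
      have cv: "inv v \<otimes> w \<otimes> v \<in> carrier M" using c by simp
      show ?thesis
      proof (cases "w \<in> H")
        case wH: True
        have wk: "w \<otimes> k0 \<otimes> inv w = k0" using H_central[OF wH K0_K[OF k0]] .
        have inner: "inv k0 \<otimes> k \<otimes> k0 \<in> K0" using K0_conj'[OF c(4) kw(1)] .
        have "th \<chi> (inv v \<otimes> (inv k0 \<otimes> k \<otimes> k0) \<otimes> v) = \<chi> (inv k0 \<otimes> k \<otimes> k0)"
          using K0_conjV'[OF vV inner] inner Vchi_conj[OF v inK0[OF inner]] by (simp add: th_def restr_def)
        also have "\<dots> = \<chi> k" using conjc_K[OF K0_K[OF k0]] c by (metis conjc_def)
        also have "\<dots> = th \<chi> k" using kw by (simp add: th_def restr_def)
        finally have "th \<chi> (inv v \<otimes> (inv k0 \<otimes> k \<otimes> k0) \<otimes> v) = th \<chi> k" .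
        thus ?thesis using True cj wk wH iff cos_eq_H[OF cv] cos_eq_H[OF c(2)]
          by (simp add: conjc_def emb0_def kw(3))
      next
        case wH: False
        thus ?thesis using True cj iff cos_eq_H[OF cv] cos_eq_H[OF c(2)] kw(2)
          by (auto simp: conjc_def emb0_def kw(3))
      qed
    qed
  qed
  thus ?thesis using sc by (simp add: stab_def)
qed

end


lemma smult_smult': "a \<cdot>\<^sub>m (b \<cdot>\<^sub>m C) = (a * b) \<cdot>\<^sub>m (C::complex mat)"
  by (intro eq_matI) (auto simp: mult.assoc)

lemma smult_mult_smult: "A \<in> carrier_mat n n \<Longrightarrow> B \<in> carrier_mat n n \<Longrightarrow>
  (a \<cdot>\<^sub>m A) * (b \<cdot>\<^sub>m B) = (a * b) \<cdot>\<^sub>m (A * (B :: complex mat))"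
  by (simp add: mult_smult_assoc_mat[of A n n _ n] mult_smult_distrib[of A n n B n] smult_smult')

context setting begin

definition dec :: "'g \<Rightarrow> 'g \<times> 'g \<times> 'g" where
  "dec x = (SOME (z, k0, v). z \<in> Z \<and> k0 \<in> K0 \<and> v \<in> V \<and> x = z \<otimes> k0 \<otimes> v)"

lemma dec_spec: assumes x: "x \<in> carrier M"
  shows "fst (dec x) \<in> Z \<and> fst (snd (dec x)) \<in> K0 \<and> snd (snd (dec x)) \<in> V \<and>
         x = fst (dec x) \<otimes> fst (snd (dec x)) \<otimes> snd (snd (dec x))"
proof -
  obtain z k0 v where "z \<in> Z" "k0 \<in> K0" "v \<in> V" "x = z \<otimes> k0 \<otimes> v" using decompM[OF x] by blast
  hence ex: "\<exists>p. (case p of (z, k0, v) \<Rightarrow> z \<in> Z \<and> k0 \<in> K0 \<and> v \<in> V \<and> x = z \<otimes> k0 \<otimes> v)" by blast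
  have "case dec x of (z, k0, v) \<Rightarrow> z \<in> Z \<and> k0 \<in> K0 \<and> v \<in> V \<and> x = z \<otimes> k0 \<otimes> v"
    unfolding dec_def by (rule someI_ex[OF ex])
  thus ?thesis by (cases "dec x") auto
qed

definition Lam :: "('g \<Rightarrow> complex) \<Rightarrow> 'g \<Rightarrow> complex" where
  "Lam \<chi> x = (if x \<in> stab M \<chi> then
     lam \<chi> (fst (dec x)) * \<Lambda>0 (nu \<chi>) (snd (snd (dec x))) *
       \<Lambda>e (emb0 H (th \<chi>)) (fst (snd (dec x)), H #> snd (snd (dec x)))
   else 0)"

end

locale chi_loc2 = chi_loc +
  fixes d :: nat and r and n2 :: nat and \<rho>2
  assumes r_irr: "irreducible_rep ((M\<lparr>carrier := V\<rparr>)\<lparr>carrier := stab (M\<lparr>carrier := V\<rparr>) (nu \<chi>)\<rparr>) d r"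
    and nu'_eq: "\<Lambda>0 (nu \<chi>) = (\<lambda>g. if g \<in> stab (M\<lparr>carrier := V\<rparr>) (nu \<chi>) then mat_trace (r g) else 0)"
    and r2_irr: "irreducible_rep ((sdp M K0 V (V \<inter> K))\<lparr>carrier := stab (sdp M K0 V (V \<inter> K)) (emb0 (V \<inter> K) (th \<chi>))\<rparr>) n2 \<rho>2"
    and th'_eq: "\<Lambda>e (emb0 (V \<inter> K) (th \<chi>)) = (\<lambda>g. if g \<in> stab (sdp M K0 V (V \<inter> K)) (emb0 (V \<inter> K) (th \<chi>)) then mat_trace (\<rho>2 g) else 0)"
begin

abbreviation "SV \<equiv> stab GV (nu \<chi>)"
abbreviation "SS \<equiv> stab SD (emb0 H (th \<chi>))"
abbreviation "nu' \<equiv> \<Lambda>0 (nu \<chi>)"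
abbreviation "th' \<equiv> \<Lambda>e (emb0 H (th \<chi>))"

lemma nu_vanish: "x \<notin> carrier GV \<Longrightarrow> nu \<chi> x = 0" by (simp add: nu_def)
lemma SV_sub: "subgroup SV GV" by (rule stab_subgroup[OF GV_group nu_vanish])
lemma SV_V: "x \<in> SV \<Longrightarrow> x \<in> V" by (simp add: stab_def)

lemma th0_vanish: "x \<notin> carrier SD \<Longrightarrow> emb0 H (th \<chi>) x = 0" by (rule emb0_vanish[OF th_vanish])
lemma SS_sub: "subgroup SS SD" by (rule stab_subgroup[OF sdp_group th0_vanish])

lemma r_rep: "is_rep (GV\<lparr>carrier := SV\<rparr>) d r" using r_irr by (simp add: irreducible_rep_def)
lemma r_mult: "a \<in> SV \<Longrightarrow> b \<in> SV \<Longrightarrow> r (a \<otimes> b) = r a * r b" using rep_mult[OF r_rep] by simp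
lemma r_one: "r \<one> = 1\<^sub>m d" using rep_one[OF r_rep] by simp
lemma r_carrier: "a \<in> SV \<Longrightarrow> r a \<in> carrier_mat d d" using rep_carrier[OF r_rep] by simp

lemma one_SV: "\<one> \<in> SV" using subgroup.one_closed[OF SV_sub] by simp
lemma one_H: "\<one> \<in> H" using V_one K_one by simp

lemma d_one: "d = 1"
proof -
  have "restr nu' H \<one> = nu \<chi> \<one>" using nu'_ext by simp
  hence "nu' \<one> = 1" using one_H lam_one by (simp add: restr_def nu_def)
  hence "mat_trace (1\<^sub>m d) = 1" using one_SV r_one nu'_eq by simp
  thus ?thesis by (simp add: mat_trace_one)
qed

lemma nu'_val: "a \<in> SV \<Longrightarrow> nu' a = r a $$ (0,0)"
  using r_carrier[of a] d_one nu'_eq by (simp add: mat_trace_def)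

lemma nu'_mult: assumes a: "a \<in> SV" and b: "b \<in> SV" shows "nu' (a \<otimes> b) = nu' a * nu' b"
proof -
  have ab: "a \<otimes> b \<in> SV" using subgroup.m_closed[OF SV_sub] a b by simp
  show ?thesis using nu'_val[OF ab] nu'_val[OF a] nu'_val[OF b] r_mult[OF a b] r_carrier[OF a] r_carrier[OF b] d_one
    by (simp add: mult_entry[of _ 1 1 _ 1])
qed

lemma nu'_one: "nu' \<one> = 1" using nu'_val[OF one_SV] r_one d_one by simp

lemma nu'_H: "h \<in> H \<Longrightarrow> nu' h = lam \<chi> h"
proof -
  assume h: "h \<in> H"
  have "restr nu' H h = nu \<chi> h" using nu'_ext by simp
  thus ?thesis using h by (simp add: restr_def nu_def)
qed

lemma Vchi_SV: "v \<in> Vchi \<Longrightarrow> v \<in> SV" by (rule Vchi_stabV)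
lemma H_Vchi: "h \<in> H \<Longrightarrow> h \<in> Vchi"
  using K_stab[of h] by (auto simp: Vchi_def stab_def)

lemma r2_rep: "is_rep (SD\<lparr>carrier := SS\<rparr>) n2 \<rho>2" using r2_irr by (simp add: irreducible_rep_def)
lemma r2_mult: "a \<in> SS \<Longrightarrow> b \<in> SS \<Longrightarrow> \<rho>2 (a \<otimes>\<^bsub>SD\<^esub> b) = \<rho>2 a * \<rho>2 b" using rep_mult[OF r2_rep] by simp
lemma r2_one: "\<rho>2 \<one>\<^bsub>SD\<^esub> = 1\<^sub>m n2" using rep_one[OF r2_rep] by simp
lemma r2_carrier: "a \<in> SS \<Longrightarrow> \<rho>2 a \<in> carrier_mat n2 n2" using rep_carrier[OF r2_rep] by simp

lemma SSin: "k0 \<in> K0 \<Longrightarrow> v \<in> Vchi \<Longrightarrow> (k0, H #> v) \<in> SS" by (rule Vchi_stabS)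
lemma SSin1: "k0 \<in> K0 \<Longrightarrow> (k0, H) \<in> SS" using SSin[of k0 \<one>] Vchi_one H_eq by simp

lemma th'_val: "s \<in> SS \<Longrightarrow> th' s = mat_trace (\<rho>2 s)" using th'_eq by simp

lemma th'_K0: "k \<in> K0 \<Longrightarrow> th' (k, H) = \<chi> k"
proof -
  assume k: "k \<in> K0"
  have "restr th' (K0 \<times> {H}) (k, H) = emb0 H (th \<chi>) (k, H)" using th'_ext by simp
  thus ?thesis using k by (simp add: restr_def emb0_def th_def)
qed

definition "\<sigma> = (\<lambda>k. \<rho>2 (k, H))"

lemma sdp_mult1: "k \<in> K0 \<Longrightarrow> k' \<in> K0 \<Longrightarrow> (k, H) \<otimes>\<^bsub>SD\<^esub> (k', H) = (k \<otimes> k', H)"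
  using sdp_mult[of k k' \<one> \<one>] V_one H_eq inK0 by simp

lemma sigma_rep: "is_rep GK0 n2 \<sigma>"
  unfolding is_rep_def \<sigma>_def
proof (intro conjI ballI)
  show "0 < n2" using rep_pos[OF r2_rep] .
  show "\<rho>2 (\<one>\<^bsub>GK0\<^esub>, H) = 1\<^sub>m n2" using r2_one sdp_one H_eq by simp
next
  fix g assume "g \<in> carrier GK0"
  thus "\<rho>2 (g, H) \<in> carrier_mat n2 n2" using r2_carrier SSin1 by simp
next
  fix g h assume g: "g \<in> carrier GK0" and h: "h \<in> carrier GK0"
  thus "\<rho>2 (g \<otimes>\<^bsub>GK0\<^esub> h, H) = \<rho>2 (g, H) * \<rho>2 (h, H)"
    using r2_mult[OF SSin1 SSin1, of g h] sdp_mult1[of g h] by simp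
qed

lemma sigma_irr: "irreducible_rep GK0 n2 \<sigma>"
proof (rule char_irred[OF GK0_group _ rho_K0_irr sigma_rep])
  show "finite (carrier GK0)" using fin K0M finite_subset by auto
  fix g assume "g \<in> carrier GK0"
  hence g: "g \<in> K0" by simp
  show "mat_trace (\<sigma> g) = mat_trace (\<rho> g)"
    using th'_val[OF SSin1[OF g]] th'_K0[OF g] chi_val[OF K0_K[OF g]] by (simp add: \<sigma>_def)
qed

lemma n2_eq: "n2 = n"
proof -
  have "mat_trace (\<sigma> \<one>) = mat_trace (\<rho> \<one>)"
    using th'_val[OF SSin1[OF K0_one]] th'_K0[OF K0_one] chi_val[OF K_one] by (simp add: \<sigma>_def)
  thus ?thesis using rep_one[OF sigma_rep] rho_one by (simp add: mat_trace_one)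
qed

lemma sigma_Z: assumes c: "c \<in> Z" and cK0: "c \<in> K0" shows "\<rho>2 (c, H) = lam \<chi> c \<cdot>\<^sub>m 1\<^sub>m n"
proof -
  have "\<exists>a. \<sigma> c = a \<cdot>\<^sub>m 1\<^sub>m n2"
  proof (rule schur[OF sigma_irr])
    show "\<sigma> c \<in> carrier_mat n2 n2" using r2_carrier[OF SSin1[OF cK0]] by (simp add: \<sigma>_def)
    fix g assume "g \<in> carrier GK0"
    hence g: "g \<in> K0" by simp
    have "c \<otimes> g = g \<otimes> c" using Z_comm[OF c K0_K[OF g]] .
    thus "\<sigma> c * \<sigma> g = \<sigma> g * \<sigma> c"
      using rep_mult[OF sigma_rep, of c g] rep_mult[OF sigma_rep, of g c] g cK0 by simp
  qed
  then obtain a where a: "\<sigma> c = a \<cdot>\<^sub>m 1\<^sub>m n" using n2_eq by auto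
  have "\<chi> c = a * of_nat n"
    using th'_val[OF SSin1[OF cK0]] th'_K0[OF cK0] a by (simp add: \<sigma>_def mat_trace_smult[of _ n] mat_trace_one)
  hence "a = lam \<chi> c" using chi_Z[OF c] npos by simp
  thus ?thesis using a by (simp add: \<sigma>_def)
qed

end


context chi_loc2 begin

definition F where
  "F z k0 v = (lam \<chi> z * nu' v) \<cdot>\<^sub>m \<rho>2 (k0, H #> v)"

lemma wd:
  assumes z: "z \<in> Z" and k0: "k0 \<in> K0" and v: "v \<in> Vchi"
    and z': "z' \<in> Z" and k0': "k0' \<in> K0" and v': "v' \<in> V"
    and eq: "z \<otimes> k0 \<otimes> v = z' \<otimes> k0' \<otimes> v'"
  shows "F z k0 v = F z' k0' v' \<and> v' \<in> Vchi"
proof -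
  have vV: "v \<in> V" using Vchi_V[OF v] .
  have c: "z \<in> carrier M" "k0 \<in> carrier M" "v \<in> carrier M" "z' \<in> carrier M" "k0' \<in> carrier M" "v' \<in> carrier M"
    using inZ[OF z] inK0[OF k0] inV[OF vV] inZ[OF z'] inK0[OF k0'] inV[OF v'] by auto
  define h where "h = v' \<otimes> inv v"
  have v'e: "v' = inv (z' \<otimes> k0') \<otimes> (z \<otimes> k0 \<otimes> v)" using eq c by (simp add: gsimps)
  have h2: "h = inv (z' \<otimes> k0') \<otimes> (z \<otimes> k0)" using c by (simp add: h_def v'e gsimps)
  have hK: "h \<in> K" using h2 K_mult K_inv Z_K z z' K0_K k0 k0' by simp
  have hV: "h \<in> V" using V_mult[OF v' V_inv[OF vV]] by (simp add: h_def)
  have hH: "h \<in> H" using hK hV by simp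
  have hc: "h \<in> carrier M" using inV[OF hV] .
  have v'h: "v' = h \<otimes> v" using c by (simp add: h_def gsimps)
  have v'Vchi: "v' \<in> Vchi" using Vchi_mult[OF H_Vchi[OF hH] v] v'h by simp
  define cc where "cc = inv z \<otimes> z' \<otimes> h"
  have ccZ: "cc \<in> Z" using Z_mult[OF Z_mult[OF Z_inv[OF z] z'] H_Z[OF hH]] by (simp add: cc_def)
  have zk: "z \<otimes> k0 = z' \<otimes> k0' \<otimes> h"
  proof -
    have "z \<otimes> k0 \<otimes> v = z' \<otimes> k0' \<otimes> h \<otimes> v" using eq v'h c hc by (simp add: m_assoc)
    thus ?thesis using c hc by (simp add: r_cancel)
  qed
  have hk: "k0' \<otimes> h = h \<otimes> k0'" using Z_comm[OF H_Z[OF hH] K0_K[OF k0']] by simp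
  have k0e: "k0 = cc \<otimes> k0'"
  proof -
    have "k0 = inv z \<otimes> (z \<otimes> k0)" using c by (simp add: gsimps)
    also have "\<dots> = inv z \<otimes> (z' \<otimes> (k0' \<otimes> h))" using zk c hc by (simp add: m_assoc)
    also have "\<dots> = inv z \<otimes> (z' \<otimes> (h \<otimes> k0'))" using hk by simp
    also have "\<dots> = cc \<otimes> k0'" using c hc by (simp add: cc_def m_assoc)
    finally show ?thesis .
  qed
  have ccK0: "cc \<in> K0"
  proof -
    have "cc = k0 \<otimes> inv k0'" using k0e c ccZ inZ by (simp add: gsimps)
    thus ?thesis using K0_mult[OF k0 K0_inv[OF k0']] by simp
  qed
  have cos: "H #> v' = H #> v" using cos_mult_H[OF hH c(3)] v'h by simp
  have prod: "(cc, H #> \<one>) \<otimes>\<^bsub>SD\<^esub> (k0', H #> v') = (k0, H #> v)"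
    using sdp_mult[OF ccK0 k0' V_one v'] c k0e cos by simp
  have r2eq: "\<rho>2 (k0, H #> v) = lam \<chi> cc \<cdot>\<^sub>m \<rho>2 (k0', H #> v')"
  proof -
    have "\<rho>2 (k0, H #> v) = \<rho>2 (cc, H) * \<rho>2 (k0', H #> v')"
      using prod r2_mult[OF SSin1[OF ccK0] SSin[OF k0' v'Vchi]] H_eq by simp
    also have "\<dots> = lam \<chi> cc \<cdot>\<^sub>m \<rho>2 (k0', H #> v')"
      using sigma_Z[OF ccZ ccK0] r2_carrier[OF SSin[OF k0' v'Vchi]] n2_eq by (simp add: scal_mult_l)
    finally show ?thesis .
  qed
  have nueq: "nu' v' = lam \<chi> h * nu' v"
    using nu'_mult[OF Vchi_SV[OF H_Vchi[OF hH]] Vchi_SV[OF v]] nu'_H[OF hH] v'h by simp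
  have lameq: "lam \<chi> z * lam \<chi> cc = lam \<chi> z' * lam \<chi> h"
  proof -
    have "z \<otimes> cc = z' \<otimes> h" using c hc by (simp add: cc_def gsimps)
    thus ?thesis using lam_mult[OF z ccZ] lam_mult[OF z' H_Z[OF hH]] by simp
  qed
  have "F z k0 v = (lam \<chi> z * nu' v * lam \<chi> cc) \<cdot>\<^sub>m \<rho>2 (k0', H #> v')"
    by (simp add: F_def r2eq smult_smult')
  also have "lam \<chi> z * nu' v * lam \<chi> cc = lam \<chi> z' * nu' v'"
  proof -
    have "lam \<chi> z * nu' v * lam \<chi> cc = (lam \<chi> z * lam \<chi> cc) * nu' v" by (simp add: ac_simps)
    also have "\<dots> = lam \<chi> z' * (lam \<chi> h * nu' v)" using lameq by (simp add: ac_simps)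
    finally show ?thesis using nueq by simp
  qed
  finally show ?thesis using v'Vchi by (simp add: F_def)
qed

definition R where
  "R x = F (fst (dec x)) (fst (snd (dec x))) (snd (snd (dec x)))"

lemma R_val: assumes z: "z \<in> Z" and k0: "k0 \<in> K0" and v: "v \<in> Vchi"
  shows "R (z \<otimes> k0 \<otimes> v) = F z k0 v"
proof -
  have xc: "z \<otimes> k0 \<otimes> v \<in> carrier M" using inZ[OF z] inK0[OF k0] inV[OF Vchi_V[OF v]] by simp
  note d = dec_spec[OF xc]
  show ?thesis unfolding R_def using wd[OF z k0 v _ _ _ ] d by metis
qed

lemma stab_elem: assumes x: "x \<in> stab M \<chi>"
  obtains z k0 v where "z \<in> Z" "k0 \<in> K0" "v \<in> Vchi" "x = z \<otimes> k0 \<otimes> v"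
proof -
  have xc: "x \<in> carrier M" using x by (simp add: stab_def)
  obtain z k0 v where d: "z \<in> Z" "k0 \<in> K0" "v \<in> V" "x = z \<otimes> k0 \<otimes> v" using decompM[OF xc] by blast
  have "v \<in> Vchi" using stab_dec[OF d(1-3)] x d(4) by simp
  thus ?thesis using that d by blast
qed

lemma dec_stab: assumes x: "x \<in> stab M \<chi>"
  shows "fst (dec x) \<in> Z \<and> fst (snd (dec x)) \<in> K0 \<and> snd (snd (dec x)) \<in> Vchi \<and>
         x = fst (dec x) \<otimes> fst (snd (dec x)) \<otimes> snd (snd (dec x))"
proof -
  have xc: "x \<in> carrier M" using x by (simp add: stab_def)
  note d = dec_spec[OF xc]
  have "snd (snd (dec x)) \<in> Vchi" using stab_dec[of "fst (dec x)" "fst (snd (dec x))" "snd (snd (dec x))"] d x by simp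
  thus ?thesis using d by simp
qed

lemma F_carrier: "k0 \<in> K0 \<Longrightarrow> v \<in> Vchi \<Longrightarrow> F z k0 v \<in> carrier_mat n n"
  using r2_carrier[OF SSin] n2_eq by (simp add: F_def)

lemma F_mult:
  assumes z: "z \<in> Z" and k0: "k0 \<in> K0" and v: "v \<in> Vchi"
    and z': "z' \<in> Z" and k0': "k0' \<in> K0" and v': "v' \<in> Vchi"
  shows "R ((z \<otimes> k0 \<otimes> v) \<otimes> (z' \<otimes> k0' \<otimes> v')) = F z k0 v * F z' k0' v'"
proof -
  have vV: "v \<in> V" "v' \<in> V" using v v' Vchi_V by auto
  have c: "z \<in> carrier M" "k0 \<in> carrier M" "v \<in> carrier M" "z' \<in> carrier M" "k0' \<in> carrier M" "v' \<in> carrier M"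
    using inZ z z' inK0 k0 k0' inV vV by auto
  define w where "w = v \<otimes> z' \<otimes> inv v"
  have wZ: "w \<in> Z" using Z_conj[OF c(3) z'] by (simp add: w_def)
  have wc: "w \<in> carrier M" using inZ[OF wZ] .
  define k1 where "k1 = v \<otimes> k0' \<otimes> inv v"
  have k1: "k1 \<in> K0" using K0_conjV[OF vV(1) k0'] by (simp add: k1_def)
  have k1c: "k1 \<in> carrier M" using inK0[OF k1] .
  have comm: "w \<otimes> k0 = k0 \<otimes> w" using Z_comm[OF wZ K0_K[OF k0]] .
  have eq: "(z \<otimes> k0 \<otimes> v) \<otimes> (z' \<otimes> k0' \<otimes> v') = (z \<otimes> w) \<otimes> (k0 \<otimes> k1) \<otimes> (v \<otimes> v')"
  proof -
    have "(z \<otimes> w) \<otimes> (k0 \<otimes> k1) \<otimes> (v \<otimes> v') = z \<otimes> ((w \<otimes> k0) \<otimes> (k1 \<otimes> (v \<otimes> v')))"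
      using c wc k1c by (simp add: m_assoc)
    also have "\<dots> = z \<otimes> ((k0 \<otimes> w) \<otimes> (k1 \<otimes> (v \<otimes> v')))" using comm by simp
    also have "\<dots> = (z \<otimes> k0 \<otimes> v) \<otimes> (z' \<otimes> k0' \<otimes> v')"
      using c by (simp add: w_def k1_def gsimps)
    finally show ?thesis by simp
  qed
  have R1: "R ((z \<otimes> k0 \<otimes> v) \<otimes> (z' \<otimes> k0' \<otimes> v')) = F (z \<otimes> w) (k0 \<otimes> k1) (v \<otimes> v')"
    unfolding eq by (rule R_val[OF Z_mult[OF z wZ] K0_mult[OF k0 k1] Vchi_mult[OF v v']])
  have sp: "(k0, H #> v) \<otimes>\<^bsub>SD\<^esub> (k0', H #> v') = (k0 \<otimes> k1, H #> (v \<otimes> v'))"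
    using sdp_mult[OF k0 k0' vV] by (simp add: k1_def)
  have r2m: "\<rho>2 (k0 \<otimes> k1, H #> (v \<otimes> v')) = \<rho>2 (k0, H #> v) * \<rho>2 (k0', H #> v')"
    using r2_mult[OF SSin[OF k0 v] SSin[OF k0' v']] sp by simp
  have lw: "lam \<chi> (z \<otimes> w) = lam \<chi> z * lam \<chi> z'"
    using lam_mult[OF z wZ] lam_Vchi[OF v z'] by (simp add: w_def)
  have nw: "nu' (v \<otimes> v') = nu' v * nu' v'" using nu'_mult[OF Vchi_SV[OF v] Vchi_SV[OF v']] .
  have "F z k0 v * F z' k0' v' = ((lam \<chi> z * nu' v) * (lam \<chi> z' * nu' v')) \<cdot>\<^sub>m (\<rho>2 (k0, H #> v) * \<rho>2 (k0', H #> v'))"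
    unfolding F_def using r2_carrier[OF SSin[OF k0 v]] r2_carrier[OF SSin[OF k0' v']]
    by (rule smult_mult_smult)
  also have "\<dots> = F (z \<otimes> w) (k0 \<otimes> k1) (v \<otimes> v')"
    by (simp add: F_def r2m lw nw algebra_simps)
  finally show ?thesis using R1 by simp
qed

end


lemma one_smult_mat': "(1::complex) \<cdot>\<^sub>m A = A" by (intro eq_matI) auto

context chi_loc2 begin

abbreviation "GS \<equiv> M\<lparr>carrier := stab M \<chi>\<rparr>"

lemma R_carrier: "x \<in> stab M \<chi> \<Longrightarrow> R x \<in> carrier_mat n n"
  using dec_stab F_carrier unfolding R_def by blast

lemma R_mult: assumes x: "x \<in> stab M \<chi>" and y: "y \<in> stab M \<chi>" shows "R (x \<otimes> y) = R x * R y"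
proof -
  obtain z k0 v where a: "z \<in> Z" "k0 \<in> K0" "v \<in> Vchi" "x = z \<otimes> k0 \<otimes> v" using stab_elem[OF x] by blast
  obtain z' k0' v' where b: "z' \<in> Z" "k0' \<in> K0" "v' \<in> Vchi" "y = z' \<otimes> k0' \<otimes> v'" using stab_elem[OF y] by blast
  show ?thesis using F_mult[OF a(1-3) b(1-3)] R_val[OF a(1-3)] R_val[OF b(1-3)] a(4) b(4) by simp
qed

lemma R_one: "R \<one> = 1\<^sub>m n"
proof -
  have "R (\<one> \<otimes> \<one> \<otimes> \<one>) = F \<one> \<one> \<one>" by (rule R_val[OF Z_one K0_one Vchi_one])
  moreover have "F \<one> \<one> \<one> = 1\<^sub>m n"
    using lam_one nu'_one r2_one sdp_one n2_eq by (simp add: F_def one_smult_mat')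
  ultimately show ?thesis by simp
qed

lemma R_K0: "k \<in> K0 \<Longrightarrow> R k = \<sigma> k"
proof -
  assume k: "k \<in> K0"
  have "R (\<one> \<otimes> k \<otimes> \<one>) = F \<one> k \<one>" by (rule R_val[OF Z_one k Vchi_one])
  thus ?thesis using k inK0[OF k] lam_one nu'_one H_eq r2_carrier[OF SSin1[OF k]]
    by (simp add: F_def \<sigma>_def one_smult_mat')
qed

lemma R_rep: "is_rep GS n R"
  unfolding is_rep_def using npos R_carrier R_one R_mult by simp

lemma R_irr: "irreducible_rep GS n R"
  unfolding irreducible_rep_def
proof (intro conjI R_rep allI impI)
  fix W assume W: "is_subspace n W \<and> (\<forall>g\<in>carrier GS. \<forall>w\<in>W. R g *\<^sub>v w \<in> W)"
  have "\<forall>g\<in>carrier GK0. \<forall>w\<in>W. \<sigma> g *\<^sub>v w \<in> W"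
  proof (intro ballI)
    fix g w assume "g \<in> carrier GK0" "w \<in> W"
    hence g: "g \<in> K0" and w: "w \<in> W" by auto
    have "g \<in> carrier GS" using K_stab[OF K0_K[OF g]] by simp
    thus "\<sigma> g *\<^sub>v w \<in> W" using W w R_K0[OF g] by auto
  qed
  thus "W = {0\<^sub>v n} \<or> W = carrier_vec n" using irr_dichotomy[OF sigma_irr] W n2_eq by auto
qed

lemma F_trace: "k0 \<in> K0 \<Longrightarrow> v \<in> Vchi \<Longrightarrow> mat_trace (F z k0 v) = lam \<chi> z * nu' v * th' (k0, H #> v)"
  using th'_val[OF SSin] r2_carrier[OF SSin] n2_eq by (simp add: F_def mat_trace_smult[of _ n])

lemma R_trace: "x \<in> stab M \<chi> \<Longrightarrow> mat_trace (R x) = Lam \<chi> x"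
  using dec_stab F_trace unfolding R_def Lam_def by auto

lemma Lam_Irr: "Lam \<chi> \<in> Irr GS"
proof -
  have "Lam \<chi> = (\<lambda>g. if g \<in> carrier GS then mat_trace (R g) else 0)"
    using R_trace by (auto simp: Lam_def intro!: ext)
  thus ?thesis using R_irr unfolding Irr_def by blast
qed

lemma Lam_val: assumes z: "z \<in> Z" and k0: "k0 \<in> K0" and v: "v \<in> Vchi"
  shows "Lam \<chi> (z \<otimes> k0 \<otimes> v) = lam \<chi> z * nu' v * th' (k0, H #> v)"
proof -
  have "z \<otimes> k0 \<otimes> v \<in> stab M \<chi>" using stab_dec[OF z k0 Vchi_V[OF v]] v by simp
  thus ?thesis using R_trace R_val[OF z k0 v] F_trace[OF k0 v] by metis
qed

lemma Lam_restr: "restr (Lam \<chi>) K = \<chi>"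
proof
  fix x
  show "restr (Lam \<chi>) K x = \<chi> x"
  proof (cases "x \<in> K")
    case True
    obtain z k0 where zk: "z \<in> Z" "k0 \<in> K0" "x = z \<otimes> k0" using decompK[OF True] by blast
    have xe: "x = z \<otimes> k0 \<otimes> \<one>" using zk inZ inK0 by simp
    have "Lam \<chi> x = lam \<chi> z * nu' \<one> * th' (k0, H #> \<one>)"
      using Lam_val[OF zk(1,2) Vchi_one] xe by simp
    also have "\<dots> = lam \<chi> z * \<chi> k0" using nu'_one H_eq th'_K0[OF zk(2)] by simp
    also have "\<dots> = \<chi> x" using chi_Zk[OF zk(1) K0_K[OF zk(2)]] zk(3) by simp
    finally show ?thesis using True by (simp add: restr_def)
  next
    case False
    thus ?thesis by (simp add: restr_def chi_out)
  qed
qed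

end


lemma irr_class:
  assumes G: "group G" and S: "subgroup S G" and psi: "\<psi> \<in> Irr (G\<lparr>carrier := S\<rparr>)" and g: "g \<in> S"
  shows "conjc G g \<psi> = \<psi>"
proof -
  obtain m \<rho> where irr: "irreducible_rep (G\<lparr>carrier := S\<rparr>) m \<rho>"
    and pe: "\<psi> = (\<lambda>x. if x \<in> S then mat_trace (\<rho> x) else 0)"
    using psi unfolding Irr_def by auto
  have GS: "group (G\<lparr>carrier := S\<rparr>)" using subgroup.subgroup_is_group[OF S G] .
  have rep: "is_rep (G\<lparr>carrier := S\<rparr>) m \<rho>" using irr by (simp add: irreducible_rep_def)
  have gc: "g \<in> carrier G" by (rule subgroup.mem_carrier[OF S g])
  have ig: "inv\<^bsub>G\<^esub> g \<in> S" by (rule subgroup.m_inv_closed[OF S g])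
  have igc: "inv\<^bsub>G\<^esub> g \<in> carrier G" using G gc by (simp add: group.inv_closed)
  have Sc: "\<And>y. y \<in> S \<Longrightarrow> y \<in> carrier G" by (rule subgroup.mem_carrier[OF S])
  show ?thesis
  proof
    fix x
    show "conjc G g \<psi> x = \<psi> x"
    proof (cases "x \<in> S")
      case True
      have "mat_trace (\<rho> (inv\<^bsub>G\<^esub> g \<otimes>\<^bsub>G\<lparr>carrier := S\<rparr>\<^esub> x \<otimes>\<^bsub>G\<lparr>carrier := S\<rparr>\<^esub> inv\<^bsub>G\<lparr>carrier := S\<rparr>\<^esub> (inv\<^bsub>G\<^esub> g)))
           = mat_trace (\<rho> x)"
        using rep_trace_conj[OF GS rep, of "inv\<^bsub>G\<^esub> g" x] ig True by simp
      moreover have "inv\<^bsub>G\<lparr>carrier := S\<rparr>\<^esub> (inv\<^bsub>G\<^esub> g) = g"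
        using group.m_inv_consistent[OF G S ig] gc G by (simp add: group.inv_inv)
      moreover have "inv\<^bsub>G\<^esub> g \<otimes>\<^bsub>G\<^esub> x \<otimes>\<^bsub>G\<^esub> g \<in> S"
        by (intro subgroup.m_closed[OF S] ig True g)
      moreover have "x \<in> carrier G" using Sc[OF True] .
      ultimately show ?thesis using True by (simp add: conjc_def pe)
    next
      case False
      show ?thesis
      proof (cases "x \<in> carrier G")
        case xc: True
        have "inv\<^bsub>G\<^esub> g \<otimes>\<^bsub>G\<^esub> x \<otimes>\<^bsub>G\<^esub> g \<notin> S"
        proof
          assume a: "inv\<^bsub>G\<^esub> g \<otimes>\<^bsub>G\<^esub> x \<otimes>\<^bsub>G\<^esub> g \<in> S"
          have "g \<otimes>\<^bsub>G\<^esub> (inv\<^bsub>G\<^esub> g \<otimes>\<^bsub>G\<^esub> x \<otimes>\<^bsub>G\<^esub> g) \<otimes>\<^bsub>G\<^esub> inv\<^bsub>G\<^esub> g \<in> S"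
            by (intro subgroup.m_closed[OF S] ig a g)
          moreover have "g \<otimes>\<^bsub>G\<^esub> (inv\<^bsub>G\<^esub> g \<otimes>\<^bsub>G\<^esub> x \<otimes>\<^bsub>G\<^esub> g) \<otimes>\<^bsub>G\<^esub> inv\<^bsub>G\<^esub> g = x"
          proof -
            interpret group G by (rule G)
            show ?thesis using gc xc by (simp add: m_assoc[symmetric]) (simp add: m_assoc)
          qed
          ultimately show False using False by simp
        qed
        thus ?thesis using False by (simp add: conjc_def pe)
      next
        case False
        thus ?thesis using Sc \<open>x \<notin> S\<close> by (simp add: conjc_def pe)
      qed
    qed
  qed
qed

context setting begin

lemma KK_loc: assumes chi: "\<chi> \<in> KK"
  obtains n \<rho> d r n2 \<rho>2 where "chi_loc2 M E \<alpha> K K0 V KK \<Lambda>0 \<Lambda>e \<chi> n \<rho> d r n2 \<rho>2"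
proof -
  obtain n \<rho> where irr: "irreducible_rep GK n \<rho>" and eq: "\<chi> = (\<lambda>g. if g \<in> carrier GK then mat_trace (\<rho> g) else 0)"
    using KKirr chi unfolding Irr_def by blast
  have cl: "chi_loc M E \<alpha> K K0 V KK \<Lambda>0 \<Lambda>e \<chi> n \<rho>"
    by (intro chi_loc.intro setting_axioms chi_loc_axioms.intro chi irr) (use eq in simp)
  interpret C: chi_loc M E \<alpha> K K0 V KK \<Lambda>0 \<Lambda>e \<chi> n \<rho> by (rule cl)
  obtain d r where r: "irreducible_rep (GV\<lparr>carrier := stab GV (nu \<chi>)\<rparr>) d r"
    "\<Lambda>0 (nu \<chi>) = (\<lambda>g. if g \<in> carrier (GV\<lparr>carrier := stab GV (nu \<chi>)\<rparr>) then mat_trace (r g) else 0)"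
    using C.nu'_ext unfolding Irr_def by blast
  obtain n2 \<rho>2 where r2: "irreducible_rep (SD\<lparr>carrier := stab SD (emb0 H (th \<chi>))\<rparr>) n2 \<rho>2"
    "\<Lambda>e (emb0 H (th \<chi>)) = (\<lambda>g. if g \<in> carrier (SD\<lparr>carrier := stab SD (emb0 H (th \<chi>))\<rparr>) then mat_trace (\<rho>2 g) else 0)"
    using C.th'_ext unfolding Irr_def by blast
  have "chi_loc2 M E \<alpha> K K0 V KK \<Lambda>0 \<Lambda>e \<chi> n \<rho> d r n2 \<rho>2"
    by (intro chi_loc2.intro cl chi_loc2_axioms.intro r(1) r2(1)) (use r(2) r2(2) in simp_all)
  thus ?thesis by (rule that)
qed

lemma KK_vanish: "\<chi> \<in> KK \<Longrightarrow> x \<notin> K \<Longrightarrow> \<chi> x = 0"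
  using KKirr unfolding Irr_def by auto
lemma KK_vanishM: "\<chi> \<in> KK \<Longrightarrow> x \<notin> carrier M \<Longrightarrow> \<chi> x = 0"
  using KK_vanish KM by auto

lemma Lam_ext: "\<chi> \<in> KK \<Longrightarrow> Lam \<chi> \<in> Irr (M\<lparr>carrier := stab M \<chi>\<rparr>) \<and> restr (Lam \<chi>) K = \<chi>"
proof -
  assume chi: "\<chi> \<in> KK"
  obtain n \<rho> d r n2 \<rho>2 where "chi_loc2 M E \<alpha> K K0 V KK \<Lambda>0 \<Lambda>e \<chi> n \<rho> d r n2 \<rho>2" using KK_loc[OF chi] by blast
  then interpret C: chi_loc2 M E \<alpha> K K0 V KK \<Lambda>0 \<Lambda>e \<chi> n \<rho> d r n2 \<rho>2 .
  show ?thesis using C.Lam_Irr C.Lam_restr by simp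
qed

lemma Lam_val_gen: assumes chi: "\<chi> \<in> KK" and z: "z \<in> Z" and k0: "k0 \<in> K0" and v: "v \<in> V"
  and cv: "conjc M v \<chi> = \<chi>"
  shows "Lam \<chi> (z \<otimes> k0 \<otimes> v) = lam \<chi> z * \<Lambda>0 (nu \<chi>) v * \<Lambda>e (emb0 H (th \<chi>)) (k0, H #> v)"
proof -
  obtain n \<rho> d r n2 \<rho>2 where "chi_loc2 M E \<alpha> K K0 V KK \<Lambda>0 \<Lambda>e \<chi> n \<rho> d r n2 \<rho>2" using KK_loc[OF chi] by blast
  then interpret C: chi_loc2 M E \<alpha> K K0 V KK \<Lambda>0 \<Lambda>e \<chi> n \<rho> d r n2 \<rho>2 .
  have "v \<in> C.Vchi" using v cv by (simp add: C.Vchi_def)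
  thus ?thesis using C.Lam_val[OF z k0] by simp
qed

lemma stab_gen: assumes chi: "\<chi> \<in> KK" and z: "z \<in> Z" and k0: "k0 \<in> K0" and v: "v \<in> V"
  shows "z \<otimes> k0 \<otimes> v \<in> stab M \<chi> \<longleftrightarrow> conjc M v \<chi> = \<chi>"
proof -
  obtain n \<rho> d r n2 \<rho>2 where "chi_loc2 M E \<alpha> K K0 V KK \<Lambda>0 \<Lambda>e \<chi> n \<rho> d r n2 \<rho>2" using KK_loc[OF chi] by blast
  then interpret C: chi_loc2 M E \<alpha> K K0 V KK \<Lambda>0 \<Lambda>e \<chi> n \<rho> d r n2 \<rho>2 .
  show ?thesis using C.stab_dec[OF z k0 v] v by (simp add: C.Vchi_def)
qed

lemma stab_subgroup_KK: assumes "\<chi> \<in> KK" shows "subgroup (stab M \<chi>) M"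
  by (rule stab_subgroup[OF grp KK_vanishM[OF assms]])

lemma K_in_stab: assumes chi: "\<chi> \<in> KK" and k: "k \<in> K" shows "k \<in> stab M \<chi>"
proof -
  obtain n \<rho> d r n2 \<rho>2 where "chi_loc2 M E \<alpha> K K0 V KK \<Lambda>0 \<Lambda>e \<chi> n \<rho> d r n2 \<rho>2" using KK_loc[OF chi] by blast
  then interpret C: chi_loc2 M E \<alpha> K K0 V KK \<Lambda>0 \<Lambda>e \<chi> n \<rho> d r n2 \<rho>2 .
  show ?thesis using C.K_stab[OF k] .
qed

lemma Lam_conjK: assumes chi: "\<chi> \<in> KK" and k: "k \<in> K" shows "conjc M k (Lam \<chi>) = Lam \<chi>"
  using irr_class[OF grp stab_subgroup_KK[OF chi] conjunct1[OF Lam_ext[OF chi]] K_in_stab[OF chi k]] .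

lemma chi_conjK: assumes chi: "\<chi> \<in> KK" and k: "k \<in> K" shows "conjc M k \<chi> = \<chi>"
  using irr_class[OF grp Ksub _ k] KKirr chi by blast

end


context setting begin

lemma conjH_iff: assumes v: "v \<in> V" and x: "x \<in> carrier M"
  shows "inv v \<otimes> x \<otimes> v \<in> H \<longleftrightarrow> x \<in> H"
proof
  assume "inv v \<otimes> x \<otimes> v \<in> H"
  hence "v \<otimes> (inv v \<otimes> x \<otimes> v) \<otimes> inv v \<in> H" using H_conjV[OF v] by blast
  thus "x \<in> H" using x inV[OF v] by (simp add: gsimps)
qed (use H_conjV'[OF v] in blast)

lemma conjc_back: assumes m: "m \<in> carrier M" and f: "\<And>x. x \<notin> carrier M \<Longrightarrow> f x = 0"
  shows "conjc M (inv m) (conjc M m f) = f"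
  using conjc_comp[OF grp inv_closed[OF m] m] conjc_one[OF grp f] m by simp

lemma conjc_vanishM: "x \<notin> carrier M \<Longrightarrow> conjc M m f x = 0" by (simp add: conjc_def)

lemma stab_conj: assumes chi: "\<chi> \<in> KK" and v: "v \<in> carrier M" and x: "x \<in> carrier M"
  shows "x \<in> stab M (conjc M v \<chi>) \<longleftrightarrow> inv v \<otimes> x \<otimes> v \<in> stab M \<chi>"
proof -
  have f: "\<And>y. y \<notin> carrier M \<Longrightarrow> \<chi> y = 0" using KK_vanishM[OF chi] .
  have "conjc M x (conjc M v \<chi>) = conjc M v \<chi> \<longleftrightarrow>
        conjc M (inv v) (conjc M x (conjc M v \<chi>)) = conjc M (inv v) (conjc M v \<chi>)"
  proof
    assume "conjc M (inv v) (conjc M x (conjc M v \<chi>)) = conjc M (inv v) (conjc M v \<chi>)"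
    hence "conjc M v (conjc M (inv v) (conjc M x (conjc M v \<chi>))) = conjc M v (conjc M (inv v) (conjc M v \<chi>))"
      by simp
    moreover have "conjc M v (conjc M (inv v) g) = g" if "\<And>y. y \<notin> carrier M \<Longrightarrow> g y = 0" for g
      using conjc_back[OF inv_closed[OF v] that] v by simp
    ultimately show "conjc M x (conjc M v \<chi>) = conjc M v \<chi>" by (simp add: conjc_vanishM)
  qed simp
  also have "conjc M (inv v) (conjc M x (conjc M v \<chi>)) = conjc M (inv v \<otimes> x \<otimes> v) \<chi>"
    using v x by (simp add: conjc_comp[OF grp] m_assoc)
  also have "conjc M (inv v) (conjc M v \<chi>) = \<chi>" by (rule conjc_back[OF v f])
  finally show ?thesis using x v by (simp add: stab_def)
qed

lemma lam_conj: assumes chi: "\<chi> \<in> KK" and v: "v \<in> carrier M" and z: "z \<in> carrier M"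
  shows "lam (conjc M v \<chi>) z = lam \<chi> (inv v \<otimes> z \<otimes> v)"
  using v z by (simp add: lam_def conjc_def)

lemma nu_conj: assumes chi: "\<chi> \<in> KK" and v: "v \<in> V"
  shows "nu (conjc M v \<chi>) = conjc GV v (nu \<chi>)"
proof
  fix x
  show "nu (conjc M v \<chi>) x = conjc GV v (nu \<chi>) x"
  proof (cases "x \<in> V")
    case True
    have xc: "x \<in> carrier M" using inV[OF True] .
    show ?thesis using True conjH_iff[OF v xc] lam_conj[OF chi inV[OF v] xc]
      by (simp add: conjc_GV[OF v] nu_def)
  next
    case False
    thus ?thesis by (simp add: conjc_GV[OF v] nu_def)
  qed
qed

lemma sdp_conj1: assumes v: "v \<in> V" and k: "k \<in> K0" and w: "w \<in> V"
  shows "inv\<^bsub>SD\<^esub> (\<one>, H #> v) \<otimes>\<^bsub>SD\<^esub> (k, H #> w) \<otimes>\<^bsub>SD\<^esub> (\<one>, H #> v)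
     = (inv v \<otimes> k \<otimes> v, H #> (inv v \<otimes> w \<otimes> v))"
  using sdp_conj[OF K0_one v k w] inK0[OF k] inV[OF w] inV[OF v] by (simp add: m_assoc)

lemma emb_conj: assumes chi: "\<chi> \<in> KK" and v: "v \<in> V"
  shows "emb0 H (th (conjc M v \<chi>)) = conjc SD (\<one>, H #> v) (emb0 H (th \<chi>))"
proof
  fix x
  show "emb0 H (th (conjc M v \<chi>)) x = conjc SD (\<one>, H #> v) (emb0 H (th \<chi>)) x"
  proof (cases "x \<in> carrier SD")
    case False
    have "emb0 H (th (conjc M v \<chi>)) x = 0" by (rule emb0_vanish[OF _ False]) (simp add: th_def restr_def)
    thus ?thesis using False by (simp add: conjc_def)
  next
    case True
    then obtain k w where kw: "k \<in> K0" "w \<in> V" "x = (k, H #> w)" by (auto simp: sdp_carrier_iff)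
    have c: "k \<in> carrier M" "w \<in> carrier M" "v \<in> carrier M" using kw v inK0 inV by auto
    have cv: "inv v \<otimes> w \<otimes> v \<in> carrier M" using c by simp
    have iff: "H #> (inv v \<otimes> w \<otimes> v) = H \<longleftrightarrow> H #> w = H"
      using cos_eq_H[OF cv] cos_eq_H[OF c(2)] conjH_iff[OF v c(2)] by simp
    have kk: "inv v \<otimes> k \<otimes> v \<in> K0" using K0_conjV'[OF v kw(1)] .
    show ?thesis using True kw iff kk c sdp_conj1[OF v kw(1) kw(2)]
      by (simp add: conjc_def emb0_def th_def restr_def)
  qed
qed

lemma L0c_app: "\<phi> \<in> (\<Union>\<chi>\<in>KK. Irr_under M H \<chi>) \<Longrightarrow> v \<in> V \<Longrightarrow> \<Lambda>0 (conjc GV v \<phi>) = conjc GV v (\<Lambda>0 \<phi>)"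
  using L0c unfolding conj_equivariant_def by blast
lemma Lec_app: "\<phi> \<in> emb0 H ` (\<Union>\<chi>\<in>KK. Irr_under M K0 \<chi>) \<Longrightarrow> v \<in> V
   \<Longrightarrow> \<Lambda>e (conjc SD (\<one>, H #> v) \<phi>) = conjc SD (\<one>, H #> v) (\<Lambda>e \<phi>)"
  using Lec unfolding conj_equivariant_def by (auto simp: rcosetsGV)

lemma nuU_gen: assumes chi: "\<chi> \<in> KK" shows "nu \<chi> \<in> (\<Union>\<chi>\<in>KK. Irr_under M H \<chi>)"
proof -
  obtain n \<rho> d r n2 \<rho>2 where "chi_loc2 M E \<alpha> K K0 V KK \<Lambda>0 \<Lambda>e \<chi> n \<rho> d r n2 \<rho>2" using KK_loc[OF chi] by blast
  then interpret C: chi_loc2 M E \<alpha> K K0 V KK \<Lambda>0 \<Lambda>e \<chi> n \<rho> d r n2 \<rho>2 .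
  show ?thesis by (rule C.nuU)
qed
lemma thU_gen: assumes chi: "\<chi> \<in> KK" shows "emb0 H (th \<chi>) \<in> emb0 H ` (\<Union>\<chi>\<in>KK. Irr_under M K0 \<chi>)"
proof -
  obtain n \<rho> d r n2 \<rho>2 where "chi_loc2 M E \<alpha> K K0 V KK \<Lambda>0 \<Lambda>e \<chi> n \<rho> d r n2 \<rho>2" using KK_loc[OF chi] by blast
  then interpret C: chi_loc2 M E \<alpha> K K0 V KK \<Lambda>0 \<Lambda>e \<chi> n \<rho> d r n2 \<rho>2 .
  show ?thesis by (rule C.thU)
qed

lemma Lam_vanish: "x \<notin> stab M \<chi> \<Longrightarrow> Lam \<chi> x = 0" by (simp add: Lam_def)

lemma Lam_conjV: assumes chi: "\<chi> \<in> KK" and v: "v \<in> V"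
  shows "Lam (conjc M v \<chi>) = conjc M v (Lam \<chi>)"
proof
  fix x
  define \<chi>1 where "\<chi>1 = conjc M v \<chi>"
  have chi1: "\<chi>1 \<in> KK" using KKconj chi inV[OF v] by (simp add: \<chi>1_def)
  have vc: "v \<in> carrier M" using inV[OF v] .
  show "Lam (conjc M v \<chi>) x = conjc M v (Lam \<chi>) x"
  proof (cases "x \<in> carrier M")
    case False
    have "x \<notin> stab M \<chi>1" using False by (simp add: stab_def)
    hence "Lam \<chi>1 x = 0" by (rule Lam_vanish)
    thus ?thesis using conjc_vanishM[OF False] unfolding \<chi>1_def by simp
  next
    case xc: True
    have yc: "inv v \<otimes> x \<otimes> v \<in> carrier M" using xc vc by simp
    show ?thesis
    proof (cases "x \<in> stab M \<chi>1")
      case False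
      hence ns: "inv v \<otimes> x \<otimes> v \<notin> stab M \<chi>" using stab_conj[OF chi vc xc] by (simp add: \<chi>1_def)
      have a: "Lam \<chi>1 x = 0" using False by (rule Lam_vanish)
      have b: "conjc M v (Lam \<chi>) x = 0" using xc Lam_vanish[OF ns] by (simp add: conjc_def)
      show ?thesis using a b unfolding \<chi>1_def by simp
    next
      case True
      obtain z k0 w where d: "z \<in> Z" "k0 \<in> K0" "w \<in> V" "x = z \<otimes> k0 \<otimes> w" using decompM[OF xc] by blast
      have cw: "conjc M w \<chi>1 = \<chi>1" using stab_gen[OF chi1 d(1-3)] True d(4) by simp
      have c: "z \<in> carrier M" "k0 \<in> carrier M" "w \<in> carrier M" using d inZ inK0 inV by auto
      define z' where "z' = inv v \<otimes> z \<otimes> v"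
      define k' where "k' = inv v \<otimes> k0 \<otimes> v"
      define w' where "w' = inv v \<otimes> w \<otimes> v"
      have d': "z' \<in> Z" "k' \<in> K0" "w' \<in> V"
        using Z_conj'[OF vc d(1)] K0_conjV'[OF v d(2)] V_mult[OF V_mult[OF V_inv[OF v] d(3)] v]
        by (simp_all add: z'_def k'_def w'_def)
      have ye: "inv v \<otimes> x \<otimes> v = z' \<otimes> k' \<otimes> w'"
        using c vc d(4) by (simp add: z'_def k'_def w'_def gsimps)
      have ystab: "inv v \<otimes> x \<otimes> v \<in> stab M \<chi>" using stab_conj[OF chi vc xc] True by (simp add: \<chi>1_def)
      have cw': "conjc M w' \<chi> = \<chi>" using stab_gen[OF chi d'] ystab ye by simp
      have L1: "Lam \<chi>1 x = lam \<chi>1 z * \<Lambda>0 (nu \<chi>1) w * \<Lambda>e (emb0 H (th \<chi>1)) (k0, H #> w)"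
        using Lam_val_gen[OF chi1 d(1-3) cw] d(4) by simp
      have L2: "Lam \<chi> (inv v \<otimes> x \<otimes> v) = lam \<chi> z' * \<Lambda>0 (nu \<chi>) w' * \<Lambda>e (emb0 H (th \<chi>)) (k', H #> w')"
        using Lam_val_gen[OF chi d' cw'] ye by simp
      have e1: "lam \<chi>1 z = lam \<chi> z'" using lam_conj[OF chi vc c(1)] by (simp add: \<chi>1_def z'_def)
      have e2: "\<Lambda>0 (nu \<chi>1) w = \<Lambda>0 (nu \<chi>) w'"
        using nu_conj[OF chi v] L0c_app[OF nuU_gen[OF chi] v] d(3)
        by (simp add: \<chi>1_def conjc_GV[OF v] w'_def)
      have e3: "\<Lambda>e (emb0 H (th \<chi>1)) (k0, H #> w) = \<Lambda>e (emb0 H (th \<chi>)) (k', H #> w')"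
        using emb_conj[OF chi v] Lec_app[OF thU_gen[OF chi] v] sdp_conj1[OF v d(2) d(3)]
          sdp_elem[OF d(2) d(3)]
        by (simp add: \<chi>1_def conjc_def k'_def w'_def)
      have b: "conjc M v (Lam \<chi>) x = Lam \<chi> (inv v \<otimes> x \<otimes> v)" using xc by (simp add: conjc_def)
      have "Lam \<chi>1 x = conjc M v (Lam \<chi>) x" using L1 L2 e1 e2 e3 b by simp
      thus ?thesis unfolding \<chi>1_def .
    qed
  qed
qed

lemma Lam_conj: assumes chi: "\<chi> \<in> KK" and m: "m \<in> carrier M"
  shows "Lam (conjc M m \<chi>) = conjc M m (Lam \<chi>)"
proof -
  obtain k v where kv: "k \<in> K" "v \<in> V" "m = k \<otimes> v" using m MKV unfolding set_mult_def by blast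
  have c: "k \<in> carrier M" "v \<in> carrier M" using kv inK inV by auto
  have chi1: "conjc M v \<chi> \<in> KK" using KKconj chi c by simp
  have "conjc M m \<chi> = conjc M k (conjc M v \<chi>)" using conjc_comp[OF grp c] kv by simp
  also have "\<dots> = conjc M v \<chi>" using chi_conjK[OF chi1 kv(1)] .
  finally have "Lam (conjc M m \<chi>) = Lam (conjc M v \<chi>)" by simp
  also have "\<dots> = conjc M v (Lam \<chi>)" by (rule Lam_conjV[OF chi kv(2)])
  also have "\<dots> = conjc M k (conjc M v (Lam \<chi>))"
    using Lam_conjK[OF chi1 kv(1)] Lam_conjV[OF chi kv(2)] by simp
  also have "\<dots> = conjc M m (Lam \<chi>)" using conjc_comp[OF grp c] kv by simp
  finally show ?thesis .
qed

end


locale aut_loc = setting +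
  fixes e assumes eE: "e \<in> carrier E"
begin

definition "b = \<alpha> (inv\<^bsub>E\<^esub> e)"

lemma Egrp: "group E" using act by (simp add: acts_by_auts_def)
lemma ieE: "inv\<^bsub>E\<^esub> e \<in> carrier E" using group.inv_closed[OF Egrp eE] .
lemma b_iso: "b \<in> iso M M" using act ieE by (simp add: acts_by_auts_def b_def)
lemma b_hom: "b \<in> hom M M" using b_iso by (simp add: iso_def)
lemma b_bij: "bij_betw b (carrier M) (carrier M)" using b_iso by (simp add: iso_def)
lemma b_gh: "group_hom M M b" by (simp add: group_hom_def group_hom_axioms_def grp b_hom)
lemma b_mult: "x \<in> carrier M \<Longrightarrow> y \<in> carrier M \<Longrightarrow> b (x \<otimes> y) = b x \<otimes> b y"
  using hom_mult[OF b_hom] by simp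
lemma b_closed: "x \<in> carrier M \<Longrightarrow> b x \<in> carrier M" using hom_in_carrier[OF b_hom] by simp
lemma b_one: "b \<one> = \<one>" using group_hom.hom_one[OF b_gh] by simp
lemma b_inv: "x \<in> carrier M \<Longrightarrow> b (inv x) = inv (b x)" using group_hom.hom_inv[OF b_gh] by simp
lemma b_inj: "x \<in> carrier M \<Longrightarrow> y \<in> carrier M \<Longrightarrow> b x = b y \<Longrightarrow> x = y"
  using b_bij unfolding bij_betw_def inj_on_def by blast
lemma b_surj: "y \<in> carrier M \<Longrightarrow> \<exists>x\<in>carrier M. b x = y"
  using b_bij unfolding bij_betw_def by (metis imageE)

lemma bK: "b ` K = K" using aK ieE by (simp add: b_def)
lemma bK0: "b ` K0 = K0" using aK0 ieE by (simp add: b_def)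
lemma bV: "b ` V = V" using aV ieE by (simp add: b_def)

lemma b_img_iff: assumes S: "S \<subseteq> carrier M" and bS: "b ` S = S" and x: "x \<in> carrier M"
  shows "b x \<in> S \<longleftrightarrow> x \<in> S"
proof
  assume "b x \<in> S"
  then obtain y where y: "y \<in> S" "b y = b x" using bS by (metis imageE)
  thus "x \<in> S" using b_inj[OF _ x] S by auto
qed (use bS in blast)

lemma bK_iff: "x \<in> carrier M \<Longrightarrow> b x \<in> K \<longleftrightarrow> x \<in> K" using b_img_iff[OF KM bK] .
lemma bK0_iff: "x \<in> carrier M \<Longrightarrow> b x \<in> K0 \<longleftrightarrow> x \<in> K0" using b_img_iff[OF K0M bK0] .
lemma bV_iff: "x \<in> carrier M \<Longrightarrow> b x \<in> V \<longleftrightarrow> x \<in> V" using b_img_iff[OF VM bV] .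
lemma bH_iff: "x \<in> carrier M \<Longrightarrow> b x \<in> H \<longleftrightarrow> x \<in> H" using bK_iff bV_iff by simp

lemma bH: "b ` H = H"
proof
  show "b ` H \<subseteq> H" using bH_iff inV by auto
  show "H \<subseteq> b ` H"
  proof
    fix y assume y: "y \<in> H"
    obtain x where x: "x \<in> carrier M" "b x = y" using b_surj[OF inV[of y]] y by auto
    thus "y \<in> b ` H" using bH_iff[OF x(1)] y by auto
  qed
qed

lemma bZ: assumes z: "z \<in> Z" shows "b z \<in> Z"
proof -
  have zc: "z \<in> carrier M" using inZ[OF z] .
  have "b z \<otimes> k = k \<otimes> b z" if k: "k \<in> K" for k
  proof -
    obtain y where y: "y \<in> K" "b y = k" using k bK by (metis imageE)
    have yc: "y \<in> carrier M" using inK[OF y(1)] .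
    have "b z \<otimes> b y = b (z \<otimes> y)" using b_mult[OF zc yc] by simp
    also have "\<dots> = b (y \<otimes> z)" using Z_comm[OF z y(1)] by simp
    also have "\<dots> = b y \<otimes> b z" using b_mult[OF yc zc] .
    finally show ?thesis using y by simp
  qed
  moreover have "b z \<in> K" using bK_iff[OF zc] Z_K[OF z] by simp
  ultimately show ?thesis by (simp add: center_def)
qed

lemma b_coset: assumes w: "w \<in> carrier M" shows "b ` (H #> w) = H #> b w"
proof -
  have "b ` (H #> w) = (\<lambda>h. b (h \<otimes> w)) ` H" by (auto simp: r_coset_def)
  also have "\<dots> = (\<lambda>h. b h \<otimes> b w) ` H" by (intro image_cong refl) (simp add: b_mult inV w)
  also have "\<dots> = (\<lambda>h. h \<otimes> b w) ` (b ` H)" by (simp add: image_image)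
  also have "\<dots> = H #> b w" unfolding bH by (auto simp: r_coset_def)
  finally show ?thesis .
qed

lemma autc_eq: "autc M E \<alpha> e f = (\<lambda>x. if x \<in> carrier M then f (b x) else 0)"
  unfolding autc_def b_def by simp
lemma autc_GV_eq: "autc GV E \<alpha> e f = (\<lambda>x. if x \<in> V then f (b x) else 0)"
  unfolding autc_def b_def by simp

lemma autc_inj: assumes f: "\<And>x. x \<notin> carrier M \<Longrightarrow> f x = 0" and g: "\<And>x. x \<notin> carrier M \<Longrightarrow> g x = 0"
  and eq: "autc M E \<alpha> e f = autc M E \<alpha> e g" shows "f = g"
proof
  fix y
  show "f y = g y"
  proof (cases "y \<in> carrier M")
    case True
    then obtain x where x: "x \<in> carrier M" "b x = y" using b_surj by blast
    have "autc M E \<alpha> e f x = autc M E \<alpha> e g x" using eq by simp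
    thus ?thesis using x by (simp add: autc_eq)
  qed (simp add: f g)
qed

lemma conjc_aut: assumes x: "x \<in> carrier M"
  shows "conjc M x (autc M E \<alpha> e \<chi>) = autc M E \<alpha> e (conjc M (b x) \<chi>)"
proof
  fix y
  show "conjc M x (autc M E \<alpha> e \<chi>) y = autc M E \<alpha> e (conjc M (b x) \<chi>) y"
    using x b_closed by (simp add: conjc_def autc_eq b_mult b_inv)
qed

lemma stab_aut: assumes chi: "\<chi> \<in> KK" and x: "x \<in> carrier M"
  shows "x \<in> stab M (autc M E \<alpha> e \<chi>) \<longleftrightarrow> b x \<in> stab M \<chi>"
proof -
  have f: "\<And>y. y \<notin> carrier M \<Longrightarrow> \<chi> y = 0" using KK_vanishM[OF chi] .
  have "conjc M x (autc M E \<alpha> e \<chi>) = autc M E \<alpha> e \<chi> \<longleftrightarrow> conjc M (b x) \<chi> = \<chi>"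
  proof
    assume "conjc M x (autc M E \<alpha> e \<chi>) = autc M E \<alpha> e \<chi>"
    hence "autc M E \<alpha> e (conjc M (b x) \<chi>) = autc M E \<alpha> e \<chi>" using conjc_aut[OF x] by simp
    note eq = this
    show "conjc M (b x) \<chi> = \<chi>"
    proof
      fix y
      show "conjc M (b x) \<chi> y = \<chi> y"
      proof (cases "y \<in> carrier M")
        case True
        then obtain y' where y': "y' \<in> carrier M" "b y' = y" using b_surj by blast
        have "autc M E \<alpha> e (conjc M (b x) \<chi>) y' = autc M E \<alpha> e \<chi> y'" using eq by simp
        thus ?thesis using y' by (simp add: autc_eq)
      next
        case False
        thus ?thesis using f by (simp add: conjc_def)
      qed
    qed
  qed (simp add: conjc_aut[OF x])
  thus ?thesis using x b_closed by (simp add: stab_def)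
qed

lemma lam_aut: "z \<in> carrier M \<Longrightarrow> lam (autc M E \<alpha> e \<chi>) z = lam \<chi> (b z)"
  by (simp add: lam_def autc_eq b_one)

lemma nu_aut: "nu (autc M E \<alpha> e \<chi>) = autc GV E \<alpha> e (nu \<chi>)"
proof
  fix x
  show "nu (autc M E \<alpha> e \<chi>) x = autc GV E \<alpha> e (nu \<chi>) x"
  proof (cases "x \<in> V")
    case True
    have xc: "x \<in> carrier M" using inV[OF True] .
    show ?thesis using True xc bH_iff[OF xc]
      by (simp add: nu_def autc_GV_eq lam_aut)
  next
    case False
    thus ?thesis by (simp add: nu_def autc_GV_eq)
  qed
qed

lemma emb_aut: assumes chi: "\<chi> \<in> KK"
  shows "emb0 H (th (autc M E \<alpha> e \<chi>)) = autc SD E (sdp_act \<alpha>) e (emb0 H (th \<chi>))"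
proof
  fix x
  show "emb0 H (th (autc M E \<alpha> e \<chi>)) x = autc SD E (sdp_act \<alpha>) e (emb0 H (th \<chi>)) x"
  proof (cases "x \<in> carrier SD")
    case False
    have "emb0 H (th (autc M E \<alpha> e \<chi>)) x = 0" by (rule emb0_vanish[OF _ False]) (simp add: th_def restr_def)
    thus ?thesis using False by (simp add: autc_def)
  next
    case True
    then obtain k w where kw: "k \<in> K0" "w \<in> V" "x = (k, H #> w)" by (auto simp: sdp_carrier_iff)
    have c: "k \<in> carrier M" "w \<in> carrier M" using kw inK0 inV by auto
    have bw: "b w \<in> carrier M" using b_closed[OF c(2)] .
    have act: "sdp_act \<alpha> (inv\<^bsub>E\<^esub> e) x = (b k, H #> b w)"
      using kw b_coset[OF c(2)] by (simp add: sdp_act_def b_def)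
    have iff: "H #> b w = H \<longleftrightarrow> H #> w = H"
      using cos_eq_H[OF bw] cos_eq_H[OF c(2)] bH_iff[OF c(2)] by simp
    show ?thesis using True kw act iff bK0_iff[OF c(1)] c
      by (simp add: autc_def emb0_def th_def restr_def b_def[symmetric] autc_eq)
  qed
qed

lemma L0a_app: "\<phi> \<in> (\<Union>\<chi>\<in>KK. Irr_under M H \<chi>) \<Longrightarrow> \<Lambda>0 (autc GV E \<alpha> e \<phi>) = autc GV E \<alpha> e (\<Lambda>0 \<phi>)"
  using L0a eE unfolding aut_equivariant_def by blast
lemma Lea_app: "\<phi> \<in> emb0 H ` (\<Union>\<chi>\<in>KK. Irr_under M K0 \<chi>)
   \<Longrightarrow> \<Lambda>e (autc SD E (sdp_act \<alpha>) e \<phi>) = autc SD E (sdp_act \<alpha>) e (\<Lambda>e \<phi>)"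
  using Lea eE unfolding aut_equivariant_def by blast

lemma Lam_aut: assumes chi: "\<chi> \<in> KK"
  shows "Lam (autc M E \<alpha> e \<chi>) = autc M E \<alpha> e (Lam \<chi>)"
proof
  fix x
  define \<chi>2 where "\<chi>2 = autc M E \<alpha> e \<chi>"
  have chi2: "\<chi>2 \<in> KK" using KKaut chi eE by (simp add: \<chi>2_def)
  have "Lam \<chi>2 x = autc M E \<alpha> e (Lam \<chi>) x"
  proof (cases "x \<in> carrier M")
    case False
    have "x \<notin> stab M \<chi>2" using False by (simp add: stab_def)
    hence "Lam \<chi>2 x = 0" by (rule Lam_vanish)
    thus ?thesis using False by (simp add: autc_eq)
  next
    case xc: True
    show ?thesis
    proof (cases "x \<in> stab M \<chi>2")
      case False
      hence ns: "b x \<notin> stab M \<chi>" using stab_aut[OF chi xc] by (simp add: \<chi>2_def)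
      have a: "Lam \<chi>2 x = 0" using False by (rule Lam_vanish)
      have bb: "autc M E \<alpha> e (Lam \<chi>) x = 0" using xc Lam_vanish[OF ns] by (simp add: autc_eq)
      show ?thesis using a bb by simp
    next
      case True
      obtain z k0 w where d: "z \<in> Z" "k0 \<in> K0" "w \<in> V" "x = z \<otimes> k0 \<otimes> w" using decompM[OF xc] by blast
      have cw: "conjc M w \<chi>2 = \<chi>2" using stab_gen[OF chi2 d(1-3)] True d(4) by simp
      have c: "z \<in> carrier M" "k0 \<in> carrier M" "w \<in> carrier M" using d inZ inK0 inV by auto
      have d': "b z \<in> Z" "b k0 \<in> K0" "b w \<in> V"
        using bZ[OF d(1)] bK0_iff[OF c(2)] d(2) bV_iff[OF c(3)] d(3) by auto
      have ye: "b x = b z \<otimes> b k0 \<otimes> b w" using d(4) c by (simp add: b_mult)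
      have ystab: "b x \<in> stab M \<chi>" using stab_aut[OF chi xc] True by (simp add: \<chi>2_def)
      have cw': "conjc M (b w) \<chi> = \<chi>" using stab_gen[OF chi d'] ystab ye by simp
      have L1: "Lam \<chi>2 x = lam \<chi>2 z * \<Lambda>0 (nu \<chi>2) w * \<Lambda>e (emb0 H (th \<chi>2)) (k0, H #> w)"
        using Lam_val_gen[OF chi2 d(1-3) cw] d(4) by simp
      have L2: "Lam \<chi> (b x) = lam \<chi> (b z) * \<Lambda>0 (nu \<chi>) (b w) * \<Lambda>e (emb0 H (th \<chi>)) (b k0, H #> b w)"
        using Lam_val_gen[OF chi d' cw'] ye by simp
      have e1: "lam \<chi>2 z = lam \<chi> (b z)" using lam_aut[OF c(1)] by (simp add: \<chi>2_def)
      have e2: "\<Lambda>0 (nu \<chi>2) w = \<Lambda>0 (nu \<chi>) (b w)"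
        using nu_aut L0a_app[OF nuU_gen[OF chi]] d(3)
        by (simp add: \<chi>2_def autc_def b_def)
      have act: "sdp_act \<alpha> (inv\<^bsub>E\<^esub> e) (k0, H #> w) = (b k0, H #> b w)"
        using b_coset[OF c(3)] by (simp add: sdp_act_def b_def)
      have e3: "\<Lambda>e (emb0 H (th \<chi>2)) (k0, H #> w) = \<Lambda>e (emb0 H (th \<chi>)) (b k0, H #> b w)"
        using emb_aut[OF chi] Lea_app[OF thU_gen[OF chi]] sdp_elem[OF d(2) d(3)] act
        by (simp add: \<chi>2_def autc_def)
      have bb: "autc M E \<alpha> e (Lam \<chi>) x = Lam \<chi> (b x)" using xc by (simp add: autc_eq)
      show ?thesis using L1 L2 e1 e2 e3 bb by simp
    qed
  qed
  thus "Lam (autc M E \<alpha> e \<chi>) x = autc M E \<alpha> e (Lam \<chi>) x" by (simp add: \<chi>2_def)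
qed

end


theorem proposition4p1:
  fixes M :: "('g, 'b) monoid_scheme" and E :: "('e, 'c) monoid_scheme"
    and \<alpha> :: "'e \<Rightarrow> 'g \<Rightarrow> 'g"
    and K K0 :: "'g set" and KK :: "('g \<Rightarrow> complex) set"
  assumes "group M" and "finite (carrier M)"
    and "K \<lhd> M" and "K0 \<lhd> M" and "K0 \<subseteq> K"
    and "acts_by_auts E M \<alpha>"
    and "\<forall>e\<in>carrier E. \<alpha> e ` K = K" and "\<forall>e\<in>carrier E. \<alpha> e ` K0 = K0"
    and "KK \<subseteq> Irr (M\<lparr>carrier := K\<rparr>)"
    and "\<forall>m\<in>carrier M. \<forall>\<chi>\<in>KK. conjc M m \<chi> \<in> KK"
    and "\<forall>e\<in>carrier E. \<forall>\<chi>\<in>KK. autc M E \<alpha> e \<chi> \<in> KK"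
    \<comment> \<open>(i)\<close>
    and "K = center M K <#>\<^bsub>M\<^esub> K0"
    \<comment> \<open>(ii)\<close>
    and "\<exists>V. subgroup V M \<and> (\<forall>e\<in>carrier E. \<alpha> e ` V = V) \<and>
           carrier M = K <#>\<^bsub>M\<^esub> V \<and> V \<inter> K \<subseteq> center M K \<and>
           (\<exists>\<Lambda>0. ext_map (M\<lparr>carrier := V\<rparr>) (V \<inter> K) (\<Union>\<chi>\<in>KK. Irr_under M (V \<inter> K) \<chi>) \<Lambda>0 \<and>
                  conj_equivariant (M\<lparr>carrier := V\<rparr>) V (\<Union>\<chi>\<in>KK. Irr_under M (V \<inter> K) \<chi>) \<Lambda>0 \<and>
                  aut_equivariant (M\<lparr>carrier := V\<rparr>) E \<alpha> (\<Union>\<chi>\<in>KK. Irr_under M (V \<inter> K) \<chi>) \<Lambda>0) \<and>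
    \<comment> \<open>(iii)\<close>
           (\<exists>\<Lambda>e. ext_map (sdp M K0 V (V \<inter> K)) (K0 \<times> {V \<inter> K})
                      (emb0 (V \<inter> K) ` (\<Union>\<chi>\<in>KK. Irr_under M K0 \<chi>)) \<Lambda>e \<and>
                  conj_equivariant (sdp M K0 V (V \<inter> K)) ({\<one>\<^bsub>M\<^esub>} \<times> rcosets\<^bsub>M\<lparr>carrier := V\<rparr>\<^esub> (V \<inter> K))
                      (emb0 (V \<inter> K) ` (\<Union>\<chi>\<in>KK. Irr_under M K0 \<chi>)) \<Lambda>e \<and>
                  aut_equivariant (sdp M K0 V (V \<inter> K)) E (sdp_act \<alpha>)
                      (emb0 (V \<inter> K) ` (\<Union>\<chi>\<in>KK. Irr_under M K0 \<chi>)) \<Lambda>e)"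
  shows "\<exists>\<Lambda>. ext_map M K KK \<Lambda> \<and> conj_equivariant M (carrier M) KK \<Lambda> \<and>
              aut_equivariant M E \<alpha> KK \<Lambda>"
proof -
  obtain V \<Lambda>0 \<Lambda>e where V: "subgroup V M" "\<forall>e\<in>carrier E. \<alpha> e ` V = V"
    "carrier M = K <#>\<^bsub>M\<^esub> V" "V \<inter> K \<subseteq> center M K"
    and L0: "ext_map (M\<lparr>carrier := V\<rparr>) (V \<inter> K) (\<Union>\<chi>\<in>KK. Irr_under M (V \<inter> K) \<chi>) \<Lambda>0"
      "conj_equivariant (M\<lparr>carrier := V\<rparr>) V (\<Union>\<chi>\<in>KK. Irr_under M (V \<inter> K) \<chi>) \<Lambda>0"
      "aut_equivariant (M\<lparr>carrier := V\<rparr>) E \<alpha> (\<Union>\<chi>\<in>KK. Irr_under M (V \<inter> K) \<chi>) \<Lambda>0"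
    and Le: "ext_map (sdp M K0 V (V \<inter> K)) (K0 \<times> {V \<inter> K})
                      (emb0 (V \<inter> K) ` (\<Union>\<chi>\<in>KK. Irr_under M K0 \<chi>)) \<Lambda>e"
      "conj_equivariant (sdp M K0 V (V \<inter> K)) ({\<one>\<^bsub>M\<^esub>} \<times> rcosets\<^bsub>M\<lparr>carrier := V\<rparr>\<^esub> (V \<inter> K))
                      (emb0 (V \<inter> K) ` (\<Union>\<chi>\<in>KK. Irr_under M K0 \<chi>)) \<Lambda>e"
      "aut_equivariant (sdp M K0 V (V \<inter> K)) E (sdp_act \<alpha>)
                      (emb0 (V \<inter> K) ` (\<Union>\<chi>\<in>KK. Irr_under M K0 \<chi>)) \<Lambda>e"
    using assms(13) by blast
  have S: "setting M E \<alpha> K K0 V KK \<Lambda>0 \<Lambda>e"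
    by (rule setting.intro) (use assms V L0 Le in auto)
  interpret S: setting M E \<alpha> K K0 V KK \<Lambda>0 \<Lambda>e by (rule S)
  have ext: "ext_map M K KK S.Lam"
    unfolding ext_map_def using S.Lam_ext by blast
  have cj: "conj_equivariant M (carrier M) KK S.Lam"
    unfolding conj_equivariant_def using S.Lam_conj by blast
  have au: "aut_equivariant M E \<alpha> KK S.Lam"
    unfolding aut_equivariant_def
  proof (intro ballI)
    fix e \<chi> assume e: "e \<in> carrier E" and chi: "\<chi> \<in> KK"
    interpret A: aut_loc M E \<alpha> K K0 V KK \<Lambda>0 \<Lambda>e e
      by (rule aut_loc.intro[OF S]) (rule aut_loc_axioms.intro[OF e])
    show "S.Lam (autc M E \<alpha> e \<chi>) = autc M E \<alpha> e (S.Lam \<chi>)" by (rule A.Lam_aut[OF chi])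
  qed
  show ?thesis using ext cj au by blast
qed


end
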